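(* Let $Z_1, Z_2, \ldots$ be independent, identically distributed random vectors in $\mathbb{R}^2$, and let $Z_1', Z_2', \ldots$ be an independent copy of this sequence. Let $S_0 := 0$, $S_n := \sum_{i=1}^n Z_i$. Fix $n \in \mathbb{N}$ and for $i \in \{1,\ldots,n\}$ define $S_j^{(i)} := S_j$ if $j < i$ and $S_j^{(i)} := S_j - Z_i + Z_i'$ if $j \geq i$ ($0\le j\le n$). For $\theta \in [0,\pi]$ let $e_\theta := (\cos\theta,\sin\theta)$; let $\underline{J}_n(\theta)$ and $\bar J_n(\theta)$ be indices in $\{0,\ldots,n\}$ at which $j \mapsto S_j \cdot e_\theta$ attains its minimum and maximum respectively, and $\underline{J}_n^{(i)}(\theta)$, $\bar J_n^{(i)}(\theta)$ the analogous indices for $j \mapsto S_j^{(i)}\cdot e_\theta$. Let $\Delta_n^{(i)}(\theta) := R_n(\theta) - R_n^{(i)}(\theta)$ where $R_n(\theta) := \max_{0\le j\le n} S_j\cdot e_\theta - \min_{0\le j \le n} S_j\cdot e_\theta$ and $R_n^{(i)}(\theta)$ is defined likewise with $S_j^{(i)}$. For $\gamma \in (0,1/2)$ and $\delta \in (0,\pi/2)$, let $E_{n,i}(\delta,\gamma)$ be the event that for all $\theta \in [\delta,\pi-\delta]$: $\underline{J}_n(\theta) < \gamma n$, $\bar J_n(\theta) > (1-\gamma)n$, $\underline{J}_n^{(i)}(\theta) < \gamma n$ and $\bar J_n^{(i)}(\theta) > (1-\gamma)n$. Let $I_{n,\gamma} := \{1,\ldots,n\} \cap [\gamma n, (1-\gamma)n]$.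 Then for any $\gamma \in (0,1/2)$ and $\delta \in (0,\pi/2)$: (i) if $i \in I_{n,\gamma}$, then almost surely, for every $\theta \in [\delta,\pi-\delta]$, \[ \Delta_n^{(i)}(\theta)\, \mathbf{1}(E_{n,i}(\delta,\gamma)) = (Z_i - Z_i')\cdot e_\theta\, \mathbf{1}(E_{n,i}(\delta,\gamma)); \] (ii) if $\mathbb{E}\|Z_1\| < \infty$ and $\mathbb{E}[Z_1] = \mu e_{\pi/2}$ with $\mu \in (0,\infty)$, then $\min_{1\le i\le n} \Pr[E_{n,i}(\delta,\gamma)] \to 1$ as $n \to \infty$.
   Context: The paper adopts, from this point on, the standing assumption that the mean drift points in direction $\pi/2$, i.e. $\mathbb{E}[Z_1] = \mu e_{\pi/2}$ with $\mu>0$; this is used in part (ii). *)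

theory Defs
  imports "HOL-Probability.Probability"
begin

definition walk :: "(nat \<Rightarrow> 'a \<Rightarrow> real \<times> real) \<Rightarrow> nat \<Rightarrow> 'a \<Rightarrow> real \<times> real" where
  "walk Z j \<omega> = (\<Sum>k\<in>{1..j}. Z k \<omega>)"

definition walk_res :: "(nat \<Rightarrow> 'a \<Rightarrow> real \<times> real) \<Rightarrow> (nat \<Rightarrow> 'a \<Rightarrow> real \<times> real)
    \<Rightarrow> nat \<Rightarrow> nat \<Rightarrow> 'a \<Rightarrow> real \<times> real" where
  "walk_res Z Z' i j \<omega> = (if j < i then walk Z j \<omega> else walk Z j \<omega> - Z i \<omega> + Z' i \<omega>)"

definition e :: "real \<Rightarrow> real \<times> real" where
  "e \<theta> = (cos \<theta>, sin \<theta>)"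

definition Jmin :: "(nat \<Rightarrow> real \<times> real) \<Rightarrow> nat \<Rightarrow> real \<Rightarrow> nat" where
  "Jmin P n \<theta> = (LEAST j. j \<le> n \<and> (\<forall>k\<le>n. P j \<bullet> e \<theta> \<le> P k \<bullet> e \<theta>))"

definition Jmax :: "(nat \<Rightarrow> real \<times> real) \<Rightarrow> nat \<Rightarrow> real \<Rightarrow> nat" where
  "Jmax P n \<theta> = (LEAST j. j \<le> n \<and> (\<forall>k\<le>n. P k \<bullet> e \<theta> \<le> P j \<bullet> e \<theta>))"

definition Rng :: "(nat \<Rightarrow> real \<times> real) \<Rightarrow> nat \<Rightarrow> real \<Rightarrow> real" where
  "Rng P n \<theta> = (MAX j\<in>{0..n}. P j \<bullet> e \<theta>) - (MIN j\<in>{0..n}. P j \<bullet> e \<theta>)"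

definition Delta :: "(nat \<Rightarrow> 'a \<Rightarrow> real \<times> real) \<Rightarrow> (nat \<Rightarrow> 'a \<Rightarrow> real \<times> real)
    \<Rightarrow> nat \<Rightarrow> nat \<Rightarrow> real \<Rightarrow> 'a \<Rightarrow> real" where
  "Delta Z Z' n i \<theta> \<omega> = Rng (\<lambda>j. walk Z j \<omega>) n \<theta> - Rng (\<lambda>j. walk_res Z Z' i j \<omega>) n \<theta>"

definition Ev :: "'a measure \<Rightarrow> (nat \<Rightarrow> 'a \<Rightarrow> real \<times> real) \<Rightarrow> (nat \<Rightarrow> 'a \<Rightarrow> real \<times> real)
    \<Rightarrow> nat \<Rightarrow> nat \<Rightarrow> real \<Rightarrow> real \<Rightarrow> 'a set" where
  "Ev M Z Z' n i \<delta> \<gamma> = {\<omega> \<in> space M. \<forall>\<theta>\<in>{\<delta>..pi - \<delta>}.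
      real (Jmin (\<lambda>j. walk Z j \<omega>) n \<theta>) < \<gamma> * real n \<and>
      real (Jmax (\<lambda>j. walk Z j \<omega>) n \<theta>) > (1 - \<gamma>) * real n \<and>
      real (Jmin (\<lambda>j. walk_res Z Z' i j \<omega>) n \<theta>) < \<gamma> * real n \<and>
      real (Jmax (\<lambda>j. walk_res Z Z' i j \<omega>) n \<theta>) > (1 - \<gamma>) * real n}"

definition Iset :: "nat \<Rightarrow> real \<Rightarrow> nat set" where
  "Iset n \<gamma> = {i \<in> {1..n}. \<gamma> * real n \<le> real i \<and> real i \<le> (1 - \<gamma>) * real n}"

end

theory Submission
  imports Defs
begin



lemma lim_tail:
  fixes D :: "real measure"
  assumes pD: "prob_space D" and sD: "sets D = sets borel" and int: "integrable D (\<lambda>x. x)"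
  shows "(\<lambda>n. real n * measure D {x. \<bar>x\<bar> > real n}) \<longlonglongrightarrow> 0"
proof -
  interpret D: prob_space D by fact
  have mD[measurable_cong]: "sets D = sets borel" by fact
  have intabs: "integrable D (\<lambda>x. \<bar>x\<bar>)" using int by auto
  have lim: "(\<lambda>n. \<integral>x. \<bar>x\<bar> * indicator {x. \<bar>x\<bar> > real n} x \<partial>D) \<longlonglongrightarrow> (\<integral>x. 0 \<partial>D)"
  proof (rule integral_dominated_convergence[where w="\<lambda>x. \<bar>x\<bar>"])
    show "AE x in D. (\<lambda>n. \<bar>x\<bar> * indicator {x. \<bar>x\<bar> > real n} x) \<longlonglongrightarrow> 0"
    proof (rule AE_I2)
      fix x :: real
      obtain N :: nat where "\<bar>x\<bar> \<le> real N" using real_arch_simple by blast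
      then have "\<forall>n\<ge>N. \<bar>x\<bar> * indicator {x. \<bar>x\<bar> > real n} x = 0"
        by (auto simp: indicator_def)
      then show "(\<lambda>n. \<bar>x\<bar> * indicator {x. \<bar>x\<bar> > real n} x) \<longlonglongrightarrow> 0"
        by (intro tendsto_eventually) (auto simp: eventually_sequentially)
    qed
    show "\<And>i. AE x in D. norm (\<bar>x\<bar> * indicator {x. \<bar>x\<bar> > real i} x) \<le> \<bar>x\<bar>"
      by (auto simp: indicator_def)
    show "(\<lambda>x. 0) \<in> borel_measurable D" by simp
    show "(\<lambda>x. \<bar>x\<bar> * indicator {x. \<bar>x\<bar> > real i} x) \<in> borel_measurable D" for i
      by measurable
    show "integrable D abs" by (rule intabs)
  qed
  have b: "0 \<le> real n * measure D {x. \<bar>x\<bar> > real n} \<and>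
           real n * measure D {x. \<bar>x\<bar> > real n} \<le> (\<integral>x. \<bar>x\<bar> * indicator {x. \<bar>x\<bar> > real n} x \<partial>D)" for n
  proof
    show "0 \<le> real n * measure D {x. \<bar>x\<bar> > real n}" by simp
    have meas: "{x. \<bar>x\<bar> > real n} \<in> sets D" by measurable
    have "real n * measure D {x. \<bar>x\<bar> > real n} = (\<integral>x. real n * indicator {x. \<bar>x\<bar> > real n} x \<partial>D)"
      using meas by simp
    also have "\<dots> \<le> (\<integral>x. \<bar>x\<bar> * indicator {x. \<bar>x\<bar> > real n} x \<partial>D)"
    proof (rule integral_mono)
      show "integrable D (\<lambda>x. real n * indicator {x. \<bar>x\<bar> > real n} x)"
        using meas by (intro integrable_mult_right integrable_real_indicator) (auto simp: D.emeasure_finite[unfolded top.not_eq_extremum])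
      show "integrable D (\<lambda>x. \<bar>x\<bar> * indicator {x. \<bar>x\<bar> > real n} x)"
        using integrable_mult_indicator[OF meas intabs] by (simp add: mult.commute)
    qed (auto simp: indicator_def)
    finally show "real n * measure D {x. \<bar>x\<bar> > real n} \<le> (\<integral>x. \<bar>x\<bar> * indicator {x. \<bar>x\<bar> > real n} x \<partial>D)" .
  qed
  show ?thesis
  proof (rule tendsto_sandwich[where f="\<lambda>_. 0" and h="\<lambda>n. \<integral>x. \<bar>x\<bar> * indicator {x. \<bar>x\<bar> > real n} x \<partial>D"])
    show "\<forall>\<^sub>F n in sequentially. 0 \<le> real n * measure D {x. \<bar>x\<bar> > real n}"
      using b by (intro always_eventually) blast
    show "\<forall>\<^sub>F n in sequentially. real n * measure D {x. \<bar>x\<bar> > real n} \<le> (\<integral>x. \<bar>x\<bar> * indicator {x. \<bar>x\<bar> > real n} x \<partial>D)"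
      using b by (intro always_eventually) blast
    show "(\<lambda>_. 0::real) \<longlonglongrightarrow> 0" by (rule tendsto_const)
    show "(\<lambda>n. \<integral>x. \<bar>x\<bar> * indicator {x. \<bar>x\<bar> > real n} x \<partial>D) \<longlonglongrightarrow> 0"
      using lim by simp
  qed
qed

definition trunc :: "real \<Rightarrow> real \<Rightarrow> real" where
  "trunc t x = (if \<bar>x\<bar> \<le> t then x else 0)"

lemma trunc_measurable[measurable]: "trunc t \<in> borel_measurable borel"
  unfolding trunc_def by measurable

lemma lim_trunc_sq:
  fixes D :: "real measure"
  assumes sD: "sets D = sets borel" and int: "integrable D (\<lambda>x. x)"
  shows "(\<lambda>n. \<integral>x. (trunc (real n) x)\<^sup>2 / real n \<partial>D) \<longlonglongrightarrow> 0"
proof -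
  have mD[measurable_cong]: "sets D = sets borel" by fact
  have intabs: "integrable D (\<lambda>x. \<bar>x\<bar>)" using int by auto
  have "(\<lambda>n. \<integral>x. (trunc (real n) x)\<^sup>2 / real n \<partial>D) \<longlonglongrightarrow> (\<integral>x. 0 \<partial>D)"
  proof (rule integral_dominated_convergence[where w="\<lambda>x. \<bar>x\<bar>"])
    show "AE x in D. (\<lambda>n. (trunc (real n) x)\<^sup>2 / real n) \<longlonglongrightarrow> 0"
    proof (rule AE_I2)
      fix x :: real
      obtain N :: nat where N: "\<bar>x\<bar> \<le> real N" using real_arch_simple by blast
      have ev: "\<forall>\<^sub>F n in sequentially. x\<^sup>2 * (1 / real n) = (trunc (real n) x)\<^sup>2 / real n"
        using N unfolding eventually_sequentially
        by (intro exI[of _ N]) (auto simp: trunc_def)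
      have "(\<lambda>n. x\<^sup>2 * (1 / real n)) \<longlonglongrightarrow> x\<^sup>2 * 0"
        by (intro tendsto_mult tendsto_const lim_const_over_n)
      then show "(\<lambda>n. (trunc (real n) x)\<^sup>2 / real n) \<longlonglongrightarrow> 0"
        using Lim_transform_eventually[OF _ ev] by simp
    qed
    show "AE x in D. norm ((trunc (real i) x)\<^sup>2 / real i) \<le> \<bar>x\<bar>" for i
    proof (rule AE_I2)
      fix x :: real
      show "norm ((trunc (real i) x)\<^sup>2 / real i) \<le> \<bar>x\<bar>"
      proof (cases "\<bar>x\<bar> \<le> real i \<and> i > 0")
        case True
        have "x\<^sup>2 = \<bar>x\<bar> * \<bar>x\<bar>" by (metis abs_mult_self_eq power2_eq_square)
        also have "\<dots> \<le> \<bar>x\<bar> * real i" using True by (intro mult_left_mono) auto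
        finally have "x\<^sup>2 \<le> \<bar>x\<bar> * real i" .
        then show ?thesis using True by (simp add: trunc_def field_simps)
      next
        case False
        then show ?thesis by (auto simp: trunc_def)
      qed
    qed
    show "(\<lambda>x. 0) \<in> borel_measurable D" by simp
    show "(\<lambda>x. (trunc (real i) x)\<^sup>2 / real i) \<in> borel_measurable D" for i
      by measurable
    show "integrable D abs" by (rule intabs)
  qed
  then show ?thesis by simp
qed

lemma lim_trunc_mean:
  fixes D :: "real measure"
  assumes sD: "sets D = sets borel" and int: "integrable D (\<lambda>x. x)"
  shows "(\<lambda>n. \<integral>x. trunc (real n) x \<partial>D) \<longlonglongrightarrow> (\<integral>x. x \<partial>D)"
proof (rule integral_dominated_convergence[where w="\<lambda>x. \<bar>x\<bar>"])
  have mD[measurable_cong]: "sets D = sets borel" by fact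
  show "AE x in D. (\<lambda>n. trunc (real n) x) \<longlonglongrightarrow> x"
  proof (rule AE_I2)
    fix x :: real
    obtain N :: nat where N: "\<bar>x\<bar> \<le> real N" using real_arch_simple by blast
    then have "\<forall>\<^sub>F n in sequentially. x = trunc (real n) x"
      unfolding eventually_sequentially by (intro exI[of _ N]) (auto simp: trunc_def)
    from Lim_transform_eventually[OF tendsto_const this]
    show "(\<lambda>n. trunc (real n) x) \<longlonglongrightarrow> x" .
  qed
  show "AE x in D. norm (trunc (real i) x) \<le> \<bar>x\<bar>" for i
    by (auto simp: trunc_def)
  show "(\<lambda>x. x) \<in> borel_measurable D" by measurable
  show "trunc (real i) \<in> borel_measurable D" for i by measurable
  show "integrable D abs" using int by auto
qed



lemma (in prob_space) sq_sum_indep: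
  fixes Y :: "'i \<Rightarrow> 'a \<Rightarrow> real"
  assumes "finite I" "indep_vars (\<lambda>_. borel) Y I"
    and bnd: "\<And>i x. i \<in> I \<Longrightarrow> \<bar>Y i x\<bar> \<le> B"
    and zero: "\<And>i. i \<in> I \<Longrightarrow> expectation (Y i) = 0"
  shows "expectation (\<lambda>x. (\<Sum>i\<in>I. Y i x)\<^sup>2) = (\<Sum>i\<in>I. expectation (\<lambda>x. (Y i x)\<^sup>2))"
  using assms
proof (induction I rule: finite_induct)
  case empty
  then show ?case by simp
next
  case (insert i I)
  have ind: "indep_vars (\<lambda>_. borel) Y I"
    using insert.prems(1) by (rule indep_vars_subset) auto
  have meas[measurable]: "\<And>j. j \<in> insert i I \<Longrightarrow> Y j \<in> borel_measurable M"
    using insert.prems(1) unfolding indep_vars_def by auto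
  have intY: "\<And>j. j \<in> insert i I \<Longrightarrow> integrable M (Y j)"
    by (rule integrable_const_bound[where B=B]) (auto intro: insert.prems(2))
  have measS: "(\<lambda>x. \<Sum>j\<in>I. Y j x) \<in> borel_measurable M"
    using meas by (intro borel_measurable_sum) auto
  have bS: "\<bar>\<Sum>j\<in>I. Y j x\<bar> \<le> real (card I) * B" for x
  proof -
    have "\<bar>\<Sum>j\<in>I. Y j x\<bar> \<le> (\<Sum>j\<in>I. \<bar>Y j x\<bar>)" by (rule sum_abs)
    also have "\<dots> \<le> (\<Sum>j\<in>I. B)" by (intro sum_mono insert.prems(2)) auto
    finally show ?thesis by simp
  qed
  have intS: "integrable M (\<lambda>x. \<Sum>j\<in>I. Y j x)"
    by (rule integrable_const_bound[where B="real (card I) * B"]) (use bS measS in \<open>auto intro!: order_trans[OF bS]\<close>)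
  have bS2: "(\<Sum>j\<in>I. Y j x)\<^sup>2 \<le> (real (card I) * B)\<^sup>2" for x
  proof -
    have "\<bar>\<Sum>j\<in>I. Y j x\<bar>\<^sup>2 \<le> (real (card I) * B)\<^sup>2"
      by (rule power_mono[OF bS]) simp
    then show ?thesis by simp
  qed
  have intS2: "integrable M (\<lambda>x. (\<Sum>j\<in>I. Y j x)\<^sup>2)"
    by (rule integrable_const_bound[where B="(real (card I) * B)\<^sup>2"])
       (use bS2 measS in auto)
  have bY2: "(Y i x)\<^sup>2 \<le> B\<^sup>2" for x
  proof -
    have "\<bar>Y i x\<bar>\<^sup>2 \<le> B\<^sup>2"
      by (rule power_mono[OF insert.prems(2)]) auto
    then show ?thesis by simp
  qed
  have intY2: "integrable M (\<lambda>x. (Y i x)\<^sup>2)"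
    by (rule integrable_const_bound[where B="B\<^sup>2"]) (use bY2 in auto)
  have iv: "indep_var borel (Y i) borel (\<lambda>\<omega>. \<Sum>j\<in>I. Y j \<omega>)"
    using insert by (intro indep_vars_sum) auto
  have cross: "expectation (\<lambda>x. Y i x * (\<Sum>j\<in>I. Y j x)) = 0"
    using indep_var_lebesgue_integral[OF iv intY intS] insert.prems(3)[of i] by simp
  have intC: "integrable M (\<lambda>x. Y i x * (\<Sum>j\<in>I. Y j x))"
    using indep_var_integrable[OF iv intY intS] by simp
  have "expectation (\<lambda>x. (\<Sum>j\<in>insert i I. Y j x)\<^sup>2)
      = expectation (\<lambda>x. (Y i x)\<^sup>2 + 2 * (Y i x * (\<Sum>j\<in>I. Y j x)) + (\<Sum>j\<in>I. Y j x)\<^sup>2)"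
    using insert.hyps by (intro Bochner_Integration.integral_cong) (simp_all add: power2_sum algebra_simps)
  also have "\<dots> = expectation (\<lambda>x. (Y i x)\<^sup>2) + 2 * expectation (\<lambda>x. Y i x * (\<Sum>j\<in>I. Y j x))
       + expectation (\<lambda>x. (\<Sum>j\<in>I. Y j x)\<^sup>2)"
    using intY2 intC intS2 by simp
  also have "\<dots> = expectation (\<lambda>x. (Y i x)\<^sup>2) + (\<Sum>j\<in>I. expectation (\<lambda>x. (Y j x)\<^sup>2))"
    using cross insert.IH[OF ind] insert.prems by auto
  finally show ?case using insert.hyps by simp
qed




lemma (in prob_space) wlln_bound:
  fixes X :: "'i \<Rightarrow> 'a \<Rightarrow> real" and D :: "real measure"
  assumes indep: "indep_vars (\<lambda>_. borel) X J"
    and dist: "\<And>j. j \<in> J \<Longrightarrow> distr M borel (X j) = D"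
    and pD: "prob_space D" and sD: "sets D = sets borel"
    and int: "integrable D (\<lambda>x. x)" and eps: "\<epsilon> > 0"
  shows "\<exists>f. f \<longlonglongrightarrow> 0 \<and> (\<forall>I. I \<subseteq> J \<longrightarrow> finite I \<longrightarrow>
           prob {\<omega>\<in>space M. \<epsilon> * real (card I) < \<bar>(\<Sum>i\<in>I. X i \<omega>) - real (card I) * (\<integral>x. x \<partial>D)\<bar>}
             \<le> f (card I))"
proof -
  interpret D: prob_space D by fact
  have mD[measurable_cong]: "sets D = sets borel" by fact
  define a where "a = (\<integral>x. x \<partial>D)"
  define tl where "tl n = measure D {x. \<bar>x\<bar> > real n}" for n
  define mm where "mm n = (\<integral>x. trunc (real n) x \<partial>D)" for n
  define ss where "ss n = (\<integral>x. (trunc (real n) x)\<^sup>2 / real n \<partial>D)" for n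
  define f where "f n = real n * tl n + 4 / \<epsilon>\<^sup>2 * ss n + (if \<bar>mm n - a\<bar> > \<epsilon>/2 then 1 else 0)" for n
  have ss_nn: "ss n \<ge> 0" for n unfolding ss_def by (intro integral_nonneg_AE) auto
  have f_nn: "f n \<ge> 0" for n unfolding f_def tl_def using ss_nn eps by auto
  have lim1: "(\<lambda>n. real n * tl n) \<longlonglongrightarrow> 0" unfolding tl_def by (rule lim_tail[OF pD sD int])
  have lim2: "ss \<longlonglongrightarrow> 0" unfolding ss_def by (rule lim_trunc_sq[OF sD int])
  have lim3: "mm \<longlonglongrightarrow> a" unfolding mm_def a_def by (rule lim_trunc_mean[OF sD int])
  have "\<forall>\<^sub>F n in sequentially. \<bar>mm n - a\<bar> < \<epsilon>/2"
    using lim3[THEN tendsto_diff[OF _ tendsto_const[of a]], THEN tendsto_rabs] eps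
    by (intro order_tendstoD(2)) auto
  then have "\<forall>\<^sub>F n in sequentially. 0 = (if \<bar>mm n - a\<bar> > \<epsilon>/2 then 1 else (0::real))"
    by eventually_elim auto
  then have lim4: "(\<lambda>n. if \<bar>mm n - a\<bar> > \<epsilon>/2 then 1 else (0::real)) \<longlonglongrightarrow> 0"
    by (rule Lim_transform_eventually[OF tendsto_const])
  have flim: "f \<longlonglongrightarrow> 0"
    unfolding f_def using tendsto_add[OF tendsto_add[OF lim1 tendsto_mult[OF tendsto_const[of "4 / \<epsilon>\<^sup>2"] lim2]] lim4] by simp
  have bound: "prob {\<omega>\<in>space M. \<epsilon> * real (card I) < \<bar>(\<Sum>i\<in>I. X i \<omega>) - real (card I) * a\<bar>} \<le> f (card I)"
    if IJ: "I \<subseteq> J" and fI: "finite I" for I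
  proof -
    define t where "t = card I"
    have measX[measurable]: "\<And>i. i \<in> I \<Longrightarrow> X i \<in> borel_measurable M"
      using indep IJ unfolding indep_vars_def by auto
    define Ev where "Ev = {\<omega>\<in>space M. \<epsilon> * real t < \<bar>(\<Sum>i\<in>I. X i \<omega>) - real t * a\<bar>}"
    show ?thesis
    proof (cases "t = 0")
      case True
      then have "I = {}" using fI t_def by simp
      then show ?thesis using f_nn by simp
    next
      case tpos: False
      show ?thesis
      proof (cases "\<bar>mm t - a\<bar> > \<epsilon>/2")
        case True
        have "prob Ev \<le> 1" by simp
        also have "1 \<le> f t" unfolding f_def tl_def using True ss_nn[of t] eps by auto
        finally show ?thesis unfolding Ev_def t_def .
      next
        case small: False
        define Y where "Y i \<omega> = trunc (real t) (X i \<omega>)" for i \<omega>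
        define A where "A = (\<Union>i\<in>I. {\<omega>\<in>space M. real t < \<bar>X i \<omega>\<bar>})"
        define B where "B = {\<omega>\<in>space M. \<epsilon> * real t / 2 \<le> \<bar>(\<Sum>i\<in>I. Y i \<omega>) - real t * mm t\<bar>}"
        have measY[measurable]: "\<And>i. i \<in> I \<Longrightarrow> Y i \<in> borel_measurable M"
          unfolding Y_def by measurable
        have Asets: "A \<in> sets M" unfolding A_def using fI by (intro sets.finite_UN) auto
        have measSY: "(\<lambda>\<omega>. \<Sum>i\<in>I. Y i \<omega>) \<in> borel_measurable M"
          by (intro borel_measurable_sum) auto
        have Bsets: "B \<in> sets M" unfolding B_def using measSY by measurable
        have sub: "Ev \<subseteq> A \<union> B"
        proof
          fix \<omega> assume w: "\<omega> \<in> Ev"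
          show "\<omega> \<in> A \<union> B"
          proof (cases "\<omega> \<in> A")
            case False
            then have "\<And>i. i \<in> I \<Longrightarrow> Y i \<omega> = X i \<omega>"
              using w unfolding A_def Ev_def Y_def trunc_def by auto
            then have eq: "(\<Sum>i\<in>I. Y i \<omega>) = (\<Sum>i\<in>I. X i \<omega>)" by simp
            have "\<epsilon> * real t < \<bar>(\<Sum>i\<in>I. X i \<omega>) - real t * a\<bar>" using w unfolding Ev_def by auto
            also have "\<dots> \<le> \<bar>(\<Sum>i\<in>I. X i \<omega>) - real t * mm t\<bar> + real t * \<bar>mm t - a\<bar>"
            proof -
              have "(\<Sum>i\<in>I. X i \<omega>) - real t * a = ((\<Sum>i\<in>I. X i \<omega>) - real t * mm t) + real t * (mm t - a)"
                by (simp add: algebra_simps)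
              then show ?thesis by (metis abs_mult abs_of_nat abs_triangle_ineq of_nat_0_le_iff abs_of_nonneg)
            qed
            also have "\<dots> \<le> \<bar>(\<Sum>i\<in>I. X i \<omega>) - real t * mm t\<bar> + real t * (\<epsilon>/2)"
              using small by (intro add_left_mono mult_left_mono) auto
            finally have "\<epsilon> * real t / 2 \<le> \<bar>(\<Sum>i\<in>I. Y i \<omega>) - real t * mm t\<bar>"
              using eq by (simp add: field_simps)
            then show ?thesis using w unfolding B_def Ev_def by auto
          qed auto
        qed
        have "prob Ev \<le> prob (A \<union> B)"
          using sub Asets Bsets by (intro finite_measure_mono) auto
        also have "\<dots> \<le> prob A + prob B"
          using Asets Bsets by (rule measure_Un_le)
        also have "prob A \<le> real t * tl t"
        proof -
          have pX: "prob {\<omega>\<in>space M. real t < \<bar>X i \<omega>\<bar>} = tl t" if "i \<in> I" for i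
          proof -
            have "tl t = measure (distr M borel (X i)) {x. \<bar>x\<bar> > real t}"
              unfolding tl_def using dist[of i] that IJ by auto
            also have "\<dots> = prob (X i -` {x. \<bar>x\<bar> > real t} \<inter> space M)"
              using that by (intro measure_distr) auto
            finally show ?thesis by (auto intro: arg_cong[where f=prob])
          qed
          have "prob A \<le> (\<Sum>i\<in>I. prob {\<omega>\<in>space M. real t < \<bar>X i \<omega>\<bar>})"
            unfolding A_def using fI by (intro finite_measure_subadditive_finite) auto
          also have "\<dots> = (\<Sum>i\<in>I. tl t)" using pX by simp
          finally show ?thesis unfolding t_def by simp
        qed
        also have "prob B \<le> 4 / \<epsilon>\<^sup>2 * ss t"
        proof -
          define S where "S \<omega> = (\<Sum>i\<in>I. Y i \<omega>)" for \<omega>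
          have tp: "real t > 0" using tpos by simp
          have bY: "\<bar>Y i \<omega>\<bar> \<le> real t" for i \<omega> unfolding Y_def trunc_def by auto
          have intY: "integrable M (Y i)" if "i \<in> I" for i
            by (rule integrable_const_bound[where B="real t"]) (use bY that in auto)
          have EY: "expectation (Y i) = mm t" if "i \<in> I" for i
          proof -
            have "mm t = (\<integral>x. trunc (real t) x \<partial>distr M borel (X i))"
              unfolding mm_def using dist[of i] that IJ by auto
            also have "\<dots> = expectation (Y i)"
              unfolding Y_def using that by (intro integral_distr) auto
            finally show ?thesis by simp
          qed
          have EY2: "expectation (\<lambda>\<omega>. (Y i \<omega>)\<^sup>2) = real t * ss t" if "i \<in> I" for i
          proof -
            have "ss t = (\<integral>x. (trunc (real t) x)\<^sup>2 \<partial>D) / real t"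
              unfolding ss_def by simp
            also have "(\<integral>x. (trunc (real t) x)\<^sup>2 \<partial>D) = (\<integral>x. (trunc (real t) x)\<^sup>2 \<partial>distr M borel (X i))"
              using dist[of i] that IJ by auto
            also have "\<dots> = expectation (\<lambda>\<omega>. (Y i \<omega>)\<^sup>2)"
              unfolding Y_def using that by (intro integral_distr) auto
            finally show ?thesis using tp by simp
          qed
          have measS[measurable]: "S \<in> borel_measurable M" unfolding S_def by (rule measSY)
          have bS: "\<bar>S \<omega>\<bar> \<le> real t * real t" for \<omega>
          proof -
            have "\<bar>S \<omega>\<bar> \<le> (\<Sum>i\<in>I. \<bar>Y i \<omega>\<bar>)" unfolding S_def by (rule sum_abs)
            also have "\<dots> \<le> (\<Sum>i\<in>I. real t)" by (intro sum_mono bY)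
            finally show ?thesis unfolding t_def by simp
          qed
          have bS2: "(S \<omega>)\<^sup>2 \<le> (real t * real t)\<^sup>2" for \<omega>
          proof -
            have "\<bar>S \<omega>\<bar>\<^sup>2 \<le> (real t * real t)\<^sup>2" by (rule power_mono[OF bS]) simp
            then show ?thesis by simp
          qed
          have intS2: "integrable M (\<lambda>\<omega>. (S \<omega>)\<^sup>2)"
            by (rule integrable_const_bound[where B="(real t * real t)\<^sup>2"]) (use bS2 in auto)
          have ES: "expectation S = real t * mm t"
            unfolding S_def using intY EY fI by (simp add: t_def)
          define Y' where "Y' i \<omega> = Y i \<omega> - mm t" for i \<omega>
          have indY': "indep_vars (\<lambda>_. borel) Y' I"
          proof -
            have "indep_vars (\<lambda>_. borel) (\<lambda>i \<omega>. (\<lambda>x. trunc (real t) x - mm t) (X i \<omega>)) I"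
              using indep_vars_subset[OF indep IJ] by (rule indep_vars_compose2) measurable
            then show ?thesis unfolding Y'_def Y_def by simp
          qed
          have var: "variance S = (\<Sum>i\<in>I. expectation (\<lambda>\<omega>. (Y' i \<omega>)\<^sup>2))"
          proof -
            have "variance S = expectation (\<lambda>\<omega>. (\<Sum>i\<in>I. Y' i \<omega>)\<^sup>2)"
              unfolding ES S_def Y'_def using fI by (simp add: sum_subtractf t_def)
            also have "\<dots> = (\<Sum>i\<in>I. expectation (\<lambda>\<omega>. (Y' i \<omega>)\<^sup>2))"
            proof (rule sq_sum_indep[OF fI indY'])
              show "\<bar>Y' i x\<bar> \<le> real t + \<bar>mm t\<bar>" if "i \<in> I" for i x
                using bY[of i x] unfolding Y'_def by linarith
              show "expectation (Y' i) = 0" if "i \<in> I" for i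
                unfolding Y'_def using intY[OF that] EY[OF that] by (simp add: prob_space)
            qed
            finally show ?thesis .
          qed
          have vY': "expectation (\<lambda>\<omega>. (Y' i \<omega>)\<^sup>2) \<le> real t * ss t" if "i \<in> I" for i
          proof -
            have bY2: "(Y i \<omega>)\<^sup>2 \<le> (real t)\<^sup>2" for \<omega>
            proof -
              have "\<bar>Y i \<omega>\<bar>\<^sup>2 \<le> (real t)\<^sup>2" by (rule power_mono[OF bY]) simp
              then show ?thesis by simp
            qed
            have intY2: "integrable M (\<lambda>\<omega>. (Y i \<omega>)\<^sup>2)"
              by (rule integrable_const_bound[where B="(real t)\<^sup>2"]) (use that bY2 in auto)
            have "expectation (\<lambda>\<omega>. (Y' i \<omega>)\<^sup>2) = variance (Y i)"
              unfolding Y'_def EY[OF that] ..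
            also have "\<dots> = expectation (\<lambda>\<omega>. (Y i \<omega>)\<^sup>2) - (expectation (Y i))\<^sup>2"
              by (rule variance_eq[OF intY[OF that] intY2])
            also have "\<dots> \<le> real t * ss t" using EY2[OF that] by simp
            finally show ?thesis .
          qed
          have "variance S \<le> real t * (real t * ss t)"
            unfolding var using sum_mono[OF vY'] by (simp add: t_def)
          have "prob B = prob {\<omega>\<in>space M. \<bar>S \<omega> - expectation S\<bar> \<ge> \<epsilon> * real t / 2}"
            unfolding B_def ES S_def by simp
          also have "\<dots> \<le> variance S / (\<epsilon> * real t / 2)\<^sup>2"
            by (rule Chebyshev_inequality) (use intS2 eps tp in auto)
          also have "\<dots> \<le> real t * (real t * ss t) / (\<epsilon> * real t / 2)\<^sup>2"
            by (intro divide_right_mono) (fact, simp)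
          also have "\<dots> = 4 / \<epsilon>\<^sup>2 * ss t"
            using tp eps by (simp add: field_simps power2_eq_square)
          finally show ?thesis .
        qed
        finally have "prob Ev \<le> f t" unfolding f_def using small by simp
        then show ?thesis unfolding Ev_def t_def .
      qed
    qed
  qed
  show ?thesis using flim bound unfolding a_def by blast
qed




lemma div_bounds_real:
  fixes a K :: nat assumes "K > 0"
  shows "real (a div K) * real K \<le> real a" "real a < (real (a div K) + 1) * real K"
proof -
  have e: "a div K * K + a mod K = a" by simp
  have "a mod K < K" using assms by simp
  then have "a < a div K * K + K" using e by linarith
  then have "a < (a div K + 1) * K" by (simp add: add_mult_distrib)
  then have "real a < real ((a div K + 1) * K)" by linarith
  then show "real a < (real (a div K) + 1) * real K" by (simp add: distrib_right)
  have "a div K * K \<le> a" using e by linarith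
  then have "real (a div K * K) \<le> real a" by linarith
  then show "real (a div K) * real K \<le> real a" by simp
qed

lemma grid_control:
  fixes T :: "nat \<Rightarrow> real" and b \<epsilon> \<gamma> :: real and K n m :: nat
  assumes mono: "\<And>a c. a \<le> c \<Longrightarrow> c \<le> n \<Longrightarrow> T a \<le> T c"
    and b: "b \<ge> 0" and eps: "\<epsilon> \<ge> 0" and g: "\<gamma> > 0" "\<gamma> * real K \<ge> 2" and n: "n > 0"
    and grid: "\<And>l. l \<le> K \<Longrightarrow> \<gamma> * real K \<le> 2 * real l \<Longrightarrow>
                 \<bar>T (l * n div K) - real (l * n div K) * b\<bar> \<le> \<epsilon> * real (l * n div K)"
    and m: "\<gamma> * real n \<le> real m" "m \<le> n"
  shows "\<bar>T m - real m * b\<bar> \<le> b * (real m / (\<gamma> * real K) + 1) + 2 * \<epsilon> * real m"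
proof -
  have Kpos: "K > 0" using g by (cases "K = 0") auto
  have Kr: "real K > 0" using Kpos by simp
  have nr: "real n > 0" using n by simp
  define l where "l = m * K div n"
  define p where "p = l * n div K"
  have l1: "real l * real n \<le> real m * real K" and l2: "real m * real K < (real l + 1) * real n"
    using div_bounds_real[OF n, of "m * K"] unfolding l_def by simp_all
  have p1: "real p * real K \<le> real l * real n" and p2: "real l * real n < (real p + 1) * real K"
    using div_bounds_real[OF Kpos, of "l * n"] unfolding p_def by simp_all
  have lK: "l \<le> K"
  proof -
    have "real l * real n \<le> real K * real n" using l1 m(2)
      by (smt (verit) Kr mult_right_mono of_nat_0_le_iff of_nat_mono mult.commute)
    then have "real l \<le> real K" using nr by simp
    then show ?thesis by simp
  qed
  have "\<gamma> * real K * real n \<le> real m * real K"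
    using mult_right_mono[OF m(1), of "real K"] by (simp add: algebra_simps)
  then have "\<gamma> * real K * real n < (real l + 1) * real n" using l2 by linarith
  then have gl: "\<gamma> * real K < real l + 1" using nr by simp
  have gl2: "\<gamma> * real K \<le> 2 * real l" using gl g(2) by linarith
  have pm: "real p \<le> real m"
  proof -
    have "real p * real K \<le> real m * real K" using p1 l1 by linarith
    then show ?thesis using Kr by simp
  qed
  have nK: "real n / real K \<le> real m / (\<gamma> * real K)"
  proof -
    have "real n / real K = (\<gamma> * real n) / (\<gamma> * real K)" using g(1) by simp
    also have "\<dots> \<le> real m / (\<gamma> * real K)" using m(1) g Kr by (intro divide_right_mono) auto
    finally show ?thesis .
  qed
  have nK2: "\<epsilon> * (real n / real K) \<le> \<epsilon> * real m"
  proof -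
    have "real m / (\<gamma> * real K) \<le> real m / 2"
      using g by (intro divide_left_mono) auto
    then have "real n / real K \<le> real m" using nK by linarith
    then show ?thesis using eps by (intro mult_left_mono) auto
  qed
  have mp: "real m - real p < real n / real K + 1"
  proof -
    have "real m * real K < real p * real K + real K + real n" using l2 p2 by (simp add: algebra_simps)
    then have "(real m - real p) * real K < (real n / real K + 1) * real K"
      using Kr by (simp add: algebra_simps)
    then show ?thesis using Kr by (simp only: mult_less_cancel_right)
  qed
  have gp: "\<bar>T p - real p * b\<bar> \<le> \<epsilon> * real p" using grid[OF lK gl2] unfolding p_def .
  have lower: "real m * b - T m \<le> b * (real m / (\<gamma> * real K) + 1) + 2 * \<epsilon> * real m"
  proof -
    have "T p \<le> T m" using mono[of p m] pm m(2) by simp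
    then have "real m * b - T m \<le> (real m - real p) * b + \<epsilon> * real p" using gp by (simp add: algebra_simps)
    also have "\<dots> \<le> (real n / real K + 1) * b + \<epsilon> * real m"
      using mp pm b eps by (intro add_mono mult_right_mono mult_left_mono) auto
    also have "\<dots> \<le> b * (real m / (\<gamma> * real K) + 1) + 2 * \<epsilon> * real m"
    proof -
      have "b * (real n / real K) \<le> b * (real m / (\<gamma> * real K))" using nK b by (rule mult_left_mono)
      moreover have "0 \<le> \<epsilon> * real m" using eps by simp
      ultimately show ?thesis by (simp add: algebra_simps)
    qed
    finally show ?thesis .
  qed
  have upper: "T m - real m * b \<le> b * (real m / (\<gamma> * real K) + 1) + 2 * \<epsilon> * real m"
  proof (cases "l < K")
    case True
    define q where "q = (l + 1) * n div K"
    have q1: "real q * real K \<le> (real l + 1) * real n" and q2: "(real l + 1) * real n < (real q + 1) * real K"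
      using div_bounds_real[OF Kpos, of "(l + 1) * n"] unfolding q_def by (simp_all add: distrib_right)
    have mq: "real m \<le> real q"
    proof -
      have "real m * real K < (real q + 1) * real K" using l2 q2 by linarith
      then have "real m < real q + 1" using Kr by (simp only: mult_less_cancel_right)
      then have "real m < real (q + 1)" by simp
      then have "m < q + 1" by (simp only: of_nat_less_iff)
      then show ?thesis by simp
    qed
    have qn: "q \<le> n"
    proof -
      have "(real l + 1) * real n \<le> real K * real n" using True nr
        by (intro mult_right_mono) auto
      then have "real q * real K \<le> real n * real K" using q1 by (simp add: algebra_simps)
      then have "real q \<le> real n" using Kr by simp
      then show ?thesis by simp
    qed
    have qm: "real q - real m \<le> real n / real K"
    proof -
      have "real q * real K \<le> real m * real K + real n" using q1 l1 by (simp add: algebra_simps)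
      then have "(real q - real m) * real K \<le> (real n / real K) * real K"
        using Kr by (simp add: algebra_simps)
      then show ?thesis using Kr by (simp add: pos_le_divide_eq)
    qed
    have gq: "\<bar>T q - real q * b\<bar> \<le> \<epsilon> * real q"
    proof -
      have "\<gamma> * real K \<le> 2 * real (l + 1)" using gl2 by simp
      from grid[OF _ this] True show ?thesis unfolding q_def by simp
    qed
    have "T m \<le> T q" using mono[of m q] mq qn by simp
    then have "T m - real m * b \<le> (real q - real m) * b + \<epsilon> * real q" using gq by (simp add: algebra_simps)
    also have "\<dots> \<le> (real n / real K) * b + \<epsilon> * (real m + real n / real K)"
      using qm b eps by (intro add_mono mult_right_mono mult_left_mono) auto
    also have "\<dots> \<le> b * (real m / (\<gamma> * real K) + 1) + 2 * \<epsilon> * real m"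
    proof -
      have "b * (real n / real K) \<le> b * (real m / (\<gamma> * real K))" using nK b by (rule mult_left_mono)
      moreover have "0 \<le> \<epsilon> * real m" using eps by simp
      ultimately show ?thesis using nK2 b by (simp add: algebra_simps)
    qed
    finally show ?thesis .
  next
    case False
    then have lK': "l = K" using lK by simp
    have "p = n" unfolding p_def lK' using Kpos by simp
    then have "m = n" using pm m(2) by simp
    have "T m - real m * b \<le> \<epsilon> * real m" using gp \<open>p = n\<close> \<open>m = n\<close> by simp
    also have "\<dots> \<le> b * (real m / (\<gamma> * real K) + 1) + 2 * \<epsilon> * real m"
      using b eps g Kr by (simp add: zero_le_mult_iff)
    finally show ?thesis .
  qed
  show ?thesis using lower upper by linarith
qed




lemma (in prob_space) sum_meas_sub:
  fixes X :: "'i \<Rightarrow> 'a \<Rightarrow> real"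
  assumes "indep_vars (\<lambda>_. borel) X J" "I \<subseteq> J"
  shows "(\<lambda>\<omega>. \<Sum>i\<in>I. X i \<omega>) \<in> borel_measurable M"
proof -
  have "\<And>i. i \<in> I \<Longrightarrow> X i \<in> borel_measurable M" using assms unfolding indep_vars_def by auto
  then show ?thesis by (intro borel_measurable_sum) auto
qed

lemma (in prob_space) unif_lln_nonneg:
  fixes X :: "'i \<Rightarrow> 'a \<Rightarrow> real" and D :: "real measure"
  assumes indep: "indep_vars (\<lambda>_. borel) X J"
    and dist: "\<And>j. j \<in> J \<Longrightarrow> distr M borel (X j) = D"
    and pD: "prob_space D" and sD: "sets D = sets borel"
    and int: "integrable D (\<lambda>x. x)"
    and nonneg: "\<And>j \<omega>. j \<in> J \<Longrightarrow> \<omega> \<in> space M \<Longrightarrow> X j \<omega> \<ge> 0"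
    and bnn: "(\<integral>x. x \<partial>D) \<ge> 0"
    and \<gamma>: "\<gamma> > 0" and \<eta>: "\<eta> > 0"
  shows "\<exists>g. g \<longlonglongrightarrow> 0 \<and> (\<forall>n Is. (\<forall>m\<le>n. Is m \<subseteq> J \<and> finite (Is m) \<and> card (Is m) = m) \<and>
            (\<forall>a c. a \<le> c \<longrightarrow> c \<le> n \<longrightarrow> Is a \<subseteq> Is c) \<longrightarrow>
         prob {\<omega>\<in>space M. \<exists>m. \<gamma> * real n \<le> real m \<and> m \<le> n \<and>
                 \<eta> * real m < \<bar>(\<Sum>i\<in>Is m. X i \<omega>) - real m * (\<integral>x. x \<partial>D)\<bar>} \<le> g n)"
proof -
  define b where "b = (\<integral>x. x \<partial>D)"
  define \<epsilon> where "\<epsilon> = \<eta> / 4"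
  have epos: "\<epsilon> > 0" unfolding \<epsilon>_def using \<eta> by simp
  obtain K :: nat where K: "max (2 / \<gamma>) (4 * b / (\<gamma> * \<eta>)) \<le> real K" using real_arch_simple by blast
  have K2: "\<gamma> * real K \<ge> 2"
  proof -
    have "2 / \<gamma> \<le> real K" using K by simp
    then show ?thesis using \<gamma> by (simp add: field_simps)
  qed
  have Kr: "real K > 0" using K2 \<gamma> by (cases "K = 0") auto
  have Kb: "b / (\<gamma> * real K) \<le> \<eta> / 4"
  proof -
    have "4 * b / (\<gamma> * \<eta>) \<le> real K" using K by simp
    then have "4 * b \<le> real K * (\<gamma> * \<eta>)" using \<gamma> \<eta> by (simp add: field_simps)
    then show ?thesis using \<gamma> \<eta> Kr by (simp add: field_simps)
  qed
  obtain f where flim: "f \<longlonglongrightarrow> 0" and fb: "\<And>I. I \<subseteq> J \<Longrightarrow> finite I \<Longrightarrow>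
     prob {\<omega>\<in>space M. \<epsilon> * real (card I) < \<bar>(\<Sum>i\<in>I. X i \<omega>) - real (card I) * b\<bar>} \<le> f (card I)"
    using wlln_bound[OF indep dist pD sD int epos] unfolding b_def by blast
  define f' where "f' t = max 0 (f t)" for t
  have f'lim: "f' \<longlonglongrightarrow> 0" unfolding f'_def using tendsto_max[OF tendsto_const[of 0] flim] by simp
  define L where "L = {l. l \<le> K \<and> \<gamma> * real K \<le> 2 * real l}"
  have finL: "finite L" unfolding L_def by auto
  define g0 where "g0 n = (\<Sum>l\<in>L. f' (l * n div K))" for n
  have g0lim: "g0 \<longlonglongrightarrow> 0"
  proof -
    have "(\<lambda>n. f' (l * n div K)) \<longlonglongrightarrow> 0" if "l \<in> L" for l
    proof -
      have "l > 0" using that K2 unfolding L_def by (cases "l = 0") auto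
      have "filterlim (\<lambda>n. l * n div K) at_top sequentially"
        unfolding filterlim_at_top
      proof
        fix N :: nat
        show "\<forall>\<^sub>F n in sequentially. N \<le> l * n div K"
          unfolding eventually_sequentially
        proof (intro exI allI impI)
          fix n assume "N * K \<le> n"
          moreover have "n \<le> l * n" using \<open>l > 0\<close> by simp
          ultimately have "N * K \<le> l * n" by (rule le_trans)
          then have "N * K div K \<le> l * n div K" by (rule div_le_mono)
          moreover have "K > 0" using Kr by simp
          ultimately show "N \<le> l * n div K" by simp
        qed
      qed
      from filterlim_compose[OF f'lim this] show ?thesis .
    qed
    then have "g0 \<longlonglongrightarrow> (\<Sum>l\<in>L. 0)" unfolding g0_def by (intro tendsto_sum) auto
    then show ?thesis by simp
  qed
  define g where "g n = g0 n + (if n = 0 \<or> real n * \<gamma> * \<eta> < 4 * b then 1 else 0)" for n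
  have glim: "g \<longlonglongrightarrow> 0"
  proof -
    obtain N :: nat where N: "4 * b / (\<gamma> * \<eta>) + 1 \<le> real N" using real_arch_simple by blast
    have "\<forall>\<^sub>F n in sequentially. 0 = (if n = 0 \<or> real n * \<gamma> * \<eta> < 4 * b then 1 else (0::real))"
      unfolding eventually_sequentially
    proof (intro exI allI impI)
      fix n assume "N \<le> n"
      then have "4 * b / (\<gamma> * \<eta>) + 1 \<le> real n" using N by linarith
      then have lt: "4 * b / (\<gamma> * \<eta>) < real n" by linarith
      have ge: "4 * b / (\<gamma> * \<eta>) \<ge> 0" using \<gamma> \<eta> bnn unfolding b_def by simp
      have gp: "\<gamma> * \<eta> > 0" using \<gamma> \<eta> by simp
      from lt have "4 * b < real n * (\<gamma> * \<eta>)" using gp by (simp add: pos_divide_less_eq)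
      moreover have "n \<noteq> 0" using lt ge by auto
      ultimately have "4 * b \<le> real n * (\<gamma> * \<eta>)" "n \<noteq> 0" by auto
      then show "0 = (if n = 0 \<or> real n * \<gamma> * \<eta> < 4 * b then 1 else (0::real))"
        by (auto simp: algebra_simps)
    qed
    then have "(\<lambda>n. if n = 0 \<or> real n * \<gamma> * \<eta> < 4 * b then 1 else (0::real)) \<longlonglongrightarrow> 0"
      by (rule Lim_transform_eventually[OF tendsto_const])
    from tendsto_add[OF g0lim this] show ?thesis unfolding g_def by simp
  qed
  have f'nn: "f' t \<ge> 0" for t unfolding f'_def by simp
  have g0nn: "g0 n \<ge> 0" for n unfolding g0_def using f'nn by (intro sum_nonneg) auto
  have bound: "prob {\<omega>\<in>space M. \<exists>m. \<gamma> * real n \<le> real m \<and> m \<le> n \<and>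
                 \<eta> * real m < \<bar>(\<Sum>i\<in>Is m. X i \<omega>) - real m * b\<bar>} \<le> g n"
    if Is: "\<forall>m\<le>n. Is m \<subseteq> J \<and> finite (Is m) \<and> card (Is m) = m"
      and nest: "\<forall>a c. a \<le> c \<longrightarrow> c \<le> n \<longrightarrow> Is a \<subseteq> Is c" for n Is
  proof (cases "n = 0 \<or> real n * \<gamma> * \<eta> < 4 * b")
    case True
    then have "g n \<ge> 1" unfolding g_def using g0nn[of n] by simp
    then show ?thesis using measure_le_1 order_trans by blast
  next
    case False
    then have npos: "n > 0" and nb: "4 * b \<le> real n * \<gamma> * \<eta>" by auto
    define Bad where "Bad l = {\<omega>\<in>space M. \<epsilon> * real (card (Is (l * n div K))) <
        \<bar>(\<Sum>i\<in>Is (l * n div K). X i \<omega>) - real (card (Is (l * n div K))) * b\<bar>}" for l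
    have pln: "l * n div K \<le> n" if "l \<in> L" for l
    proof -
      have "l * n div K \<le> K * n div K" using that unfolding L_def by (intro div_le_mono) auto
      then show ?thesis using Kr by simp
    qed
    have cardp: "card (Is (l * n div K)) = l * n div K" if "l \<in> L" for l
      using Is pln[OF that] by blast
    have Badsets: "Bad l \<in> sets M" if "l \<in> L" for l
    proof -
      have "(\<lambda>\<omega>. \<Sum>i\<in>Is (l * n div K). X i \<omega>) \<in> borel_measurable M"
        using Is pln[OF that] by (intro sum_meas_sub[OF indep]) blast
      then show ?thesis unfolding Bad_def by measurable
    qed
    have sub: "{\<omega>\<in>space M. \<exists>m. \<gamma> * real n \<le> real m \<and> m \<le> n \<and>
                 \<eta> * real m < \<bar>(\<Sum>i\<in>Is m. X i \<omega>) - real m * b\<bar>} \<subseteq> (\<Union>l\<in>L. Bad l)"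
    proof (rule subsetI, rule ccontr)
      fix \<omega> assume w: "\<omega> \<in> {\<omega>\<in>space M. \<exists>m. \<gamma> * real n \<le> real m \<and> m \<le> n \<and>
                 \<eta> * real m < \<bar>(\<Sum>i\<in>Is m. X i \<omega>) - real m * b\<bar>}" and nb': "\<omega> \<notin> (\<Union>l\<in>L. Bad l)"
      then obtain m where m: "\<gamma> * real n \<le> real m" "m \<le> n" and
        big: "\<eta> * real m < \<bar>(\<Sum>i\<in>Is m. X i \<omega>) - real m * b\<bar>" and ws: "\<omega> \<in> space M" by auto
      define T where "T m = (\<Sum>i\<in>Is m. X i \<omega>)" for m
      have mono: "T a \<le> T c" if "a \<le> c" "c \<le> n" for a c
        unfolding T_def
      proof (rule sum_mono2)
        show "finite (Is c)" using Is that by auto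
        show "Is a \<subseteq> Is c" using nest that by auto
        show "\<And>i. i \<in> Is c - Is a \<Longrightarrow> 0 \<le> X i \<omega>" using Is that nonneg ws by blast
      qed
      have grid: "\<bar>T (l * n div K) - real (l * n div K) * b\<bar> \<le> \<epsilon> * real (l * n div K)"
        if "l \<le> K" "\<gamma> * real K \<le> 2 * real l" for l
      proof -
        have lL: "l \<in> L" using that unfolding L_def by auto
        have "\<omega> \<notin> Bad l" using nb' lL by auto
        then show ?thesis using ws cardp[OF lL] unfolding Bad_def T_def by auto
      qed
      have "\<bar>T m - real m * b\<bar> \<le> b * (real m / (\<gamma> * real K) + 1) + 2 * \<epsilon> * real m"
        by (rule grid_control[OF mono bnn[folded b_def] _ \<gamma> K2 npos grid m]) (use epos in auto)
      also have "\<dots> \<le> \<eta> * real m"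
      proof -
        have "b * (real m / (\<gamma> * real K)) = real m * (b / (\<gamma> * real K))" by simp
        also have "\<dots> \<le> real m * (\<eta> / 4)" using Kb by (intro mult_left_mono) auto
        finally have 1: "b * (real m / (\<gamma> * real K)) \<le> real m * (\<eta> / 4)" .
        have "4 * b \<le> \<eta> * (\<gamma> * real n)" using nb by (simp add: algebra_simps)
        also have "\<dots> \<le> \<eta> * real m" using m(1) \<eta> by (intro mult_left_mono) auto
        finally have 2: "4 * b \<le> \<eta> * real m" .
        have 3: "real m * (\<eta> / 4) = \<eta> * real m / 4" by simp
        have 4: "2 * (\<eta> / 4) * real m = \<eta> * real m / 2" by simp
        have 5: "b * (real m / (\<gamma> * real K) + 1) = b * (real m / (\<gamma> * real K)) + b"
          by (simp add: distrib_left)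
        show ?thesis unfolding \<epsilon>_def 5 4 using 1 2 3 by linarith
      qed
      finally show False using big unfolding T_def by simp
    qed
    have "prob {\<omega>\<in>space M. \<exists>m. \<gamma> * real n \<le> real m \<and> m \<le> n \<and>
                 \<eta> * real m < \<bar>(\<Sum>i\<in>Is m. X i \<omega>) - real m * b\<bar>} \<le> prob (\<Union>l\<in>L. Bad l)"
      using sub Badsets finL by (intro finite_measure_mono sets.finite_UN) auto
    also have "\<dots> \<le> (\<Sum>l\<in>L. prob (Bad l))"
      using Badsets finL by (intro finite_measure_subadditive_finite) auto
    also have "\<dots> \<le> (\<Sum>l\<in>L. f' (l * n div K))"
    proof (rule sum_mono)
      fix l assume lL: "l \<in> L"
      have "prob (Bad l) \<le> f (card (Is (l * n div K)))"
        unfolding Bad_def using Is pln[OF lL] by (intro fb) auto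
      then show "prob (Bad l) \<le> f' (l * n div K)" using cardp[OF lL] unfolding f'_def by simp
    qed
    also have "\<dots> \<le> g n" unfolding g_def g0_def by simp
    finally show ?thesis .
  qed
  show ?thesis using glim bound unfolding b_def by blast
qed




lemma (in prob_space) finite_ex_sets:
  assumes "finite S" "\<And>m. m \<in> S \<Longrightarrow> {\<omega>\<in>space M. P m \<omega>} \<in> sets M"
  shows "{\<omega>\<in>space M. \<exists>m\<in>S. P m \<omega>} \<in> sets M"
proof -
  have "{\<omega>\<in>space M. \<exists>m\<in>S. P m \<omega>} = (\<Union>m\<in>S. {\<omega>\<in>space M. P m \<omega>})" by auto
  then show ?thesis using assms by (auto intro!: sets.finite_UN)
qed

lemma (in prob_space) unif_lln_real:
  fixes W :: "'i \<Rightarrow> 'a \<Rightarrow> real" and W0 :: "'a \<Rightarrow> real"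
  assumes indep: "indep_vars (\<lambda>_. borel) W J"
    and W0[measurable]: "W0 \<in> borel_measurable M"
    and dist: "\<And>j. j \<in> J \<Longrightarrow> distr M borel (W j) = distr M borel W0"
    and int: "integrable M W0"
    and \<gamma>: "\<gamma> > 0" and \<eta>: "\<eta> > 0"
  shows "\<exists>g. g \<longlonglongrightarrow> 0 \<and> (\<forall>n Is. (\<forall>m\<le>n. Is m \<subseteq> J \<and> finite (Is m) \<and> card (Is m) = m) \<and>
            (\<forall>a c. a \<le> c \<longrightarrow> c \<le> n \<longrightarrow> Is a \<subseteq> Is c) \<longrightarrow>
         prob {\<omega>\<in>space M. \<exists>m. \<gamma> * real n \<le> real m \<and> m \<le> n \<and>
                 \<eta> * real m < \<bar>(\<Sum>i\<in>Is m. W i \<omega>) - real m * expectation W0\<bar>} \<le> g n)"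
proof -
  have measW[measurable]: "\<And>j. j \<in> J \<Longrightarrow> W j \<in> borel_measurable M"
    using indep unfolding indep_vars_def by auto
  define P where "P x = max 0 (x::real)" for x
  define N where "N x = max 0 (- (x::real))" for x
  have [measurable]: "P \<in> borel_measurable borel" "N \<in> borel_measurable borel"
    unfolding P_def N_def by measurable
  have PN: "x = P x - N x" for x unfolding P_def N_def by auto
  define DP where "DP = distr M borel (\<lambda>\<omega>. P (W0 \<omega>))"
  define DN where "DN = distr M borel (\<lambda>\<omega>. N (W0 \<omega>))"
  have intP: "integrable M (\<lambda>\<omega>. P (W0 \<omega>))"
    by (rule Bochner_Integration.integrable_bound[OF int]) (auto simp: P_def)
  have intN: "integrable M (\<lambda>\<omega>. N (W0 \<omega>))"
    by (rule Bochner_Integration.integrable_bound[OF int]) (auto simp: N_def)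
  have gen: "\<exists>g. g \<longlonglongrightarrow> 0 \<and> (\<forall>n Is. (\<forall>m\<le>n. Is m \<subseteq> J \<and> finite (Is m) \<and> card (Is m) = m) \<and>
            (\<forall>a c. a \<le> c \<longrightarrow> c \<le> n \<longrightarrow> Is a \<subseteq> Is c) \<longrightarrow>
         prob {\<omega>\<in>space M. \<exists>m. \<gamma> * real n \<le> real m \<and> m \<le> n \<and>
                 \<eta> / 2 * real m < \<bar>(\<Sum>i\<in>Is m. F (W i \<omega>)) - real m * expectation (\<lambda>\<omega>. F (W0 \<omega>))\<bar>} \<le> g n)"
    if F: "F \<in> borel_measurable borel" "\<And>x. F x \<ge> 0" "\<And>x. F x \<le> \<bar>x\<bar>" for F
  proof -
    have [measurable]: "F \<in> borel_measurable borel" by fact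
    have intF: "integrable M (\<lambda>\<omega>. F (W0 \<omega>))"
      by (rule Bochner_Integration.integrable_bound[OF int]) (use F in auto)
    define DF where "DF = distr M borel (\<lambda>\<omega>. F (W0 \<omega>))"
    have ind: "indep_vars (\<lambda>_. borel) (\<lambda>i \<omega>. F (W i \<omega>)) J"
      using indep by (rule indep_vars_compose2) measurable
    have distF: "distr M borel (\<lambda>\<omega>. F (W j \<omega>)) = DF" if "j \<in> J" for j
    proof -
      have "distr M borel (\<lambda>\<omega>. F (W j \<omega>)) = distr (distr M borel (W j)) borel F"
        using that by (subst distr_distr) (auto simp: comp_def)
      also have "\<dots> = distr (distr M borel W0) borel F" using dist[OF that] by simp
      also have "\<dots> = DF" unfolding DF_def by (subst distr_distr) (auto simp: comp_def)
      finally show ?thesis .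
    qed
    have pDF: "prob_space DF" unfolding DF_def by (rule prob_space_distr) measurable
    have sDF: "sets DF = sets borel" unfolding DF_def by simp
    have intDF: "integrable DF (\<lambda>x. x)" unfolding DF_def
      using intF by (subst integrable_distr_eq) auto
    have meanDF: "(\<integral>x. x \<partial>DF) = expectation (\<lambda>\<omega>. F (W0 \<omega>))"
      unfolding DF_def by (subst integral_distr) auto
    have "(\<integral>x. x \<partial>DF) \<ge> 0" unfolding meanDF using F by (intro integral_nonneg_AE) auto
    from unif_lln_nonneg[OF ind distF pDF sDF intDF _ this \<gamma>, of "\<eta>/2"] \<eta> F(2)
    show ?thesis unfolding meanDF by auto
  qed
  have exP: "\<exists>g. g \<longlonglongrightarrow> 0 \<and> (\<forall>n Is. (\<forall>m\<le>n. Is m \<subseteq> J \<and> finite (Is m) \<and> card (Is m) = m) \<and>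
            (\<forall>a c. a \<le> c \<longrightarrow> c \<le> n \<longrightarrow> Is a \<subseteq> Is c) \<longrightarrow>
         prob {\<omega>\<in>space M. \<exists>m. \<gamma> * real n \<le> real m \<and> m \<le> n \<and>
                 \<eta> / 2 * real m < \<bar>(\<Sum>i\<in>Is m. P (W i \<omega>)) - real m * expectation (\<lambda>\<omega>. P (W0 \<omega>))\<bar>} \<le> g n)"
    apply (rule gen)
      apply (simp add: P_def)
     apply (simp add: P_def)
    apply (simp add: P_def)
    done
  from exP obtain gP where gP: "gP \<longlonglongrightarrow> 0 \<and> (\<forall>n Is. (\<forall>m\<le>n. Is m \<subseteq> J \<and> finite (Is m) \<and> card (Is m) = m) \<and>
            (\<forall>a c. a \<le> c \<longrightarrow> c \<le> n \<longrightarrow> Is a \<subseteq> Is c) \<longrightarrow>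
         prob {\<omega>\<in>space M. \<exists>m. \<gamma> * real n \<le> real m \<and> m \<le> n \<and>
                 \<eta> / 2 * real m < \<bar>(\<Sum>i\<in>Is m. P (W i \<omega>)) - real m * expectation (\<lambda>\<omega>. P (W0 \<omega>))\<bar>} \<le> gP n)" ..
  note gP1 = conjunct1[OF gP] and gP2 = conjunct2[OF gP]
  have exN: "\<exists>g. g \<longlonglongrightarrow> 0 \<and> (\<forall>n Is. (\<forall>m\<le>n. Is m \<subseteq> J \<and> finite (Is m) \<and> card (Is m) = m) \<and>
            (\<forall>a c. a \<le> c \<longrightarrow> c \<le> n \<longrightarrow> Is a \<subseteq> Is c) \<longrightarrow>
         prob {\<omega>\<in>space M. \<exists>m. \<gamma> * real n \<le> real m \<and> m \<le> n \<and>
                 \<eta> / 2 * real m < \<bar>(\<Sum>i\<in>Is m. N (W i \<omega>)) - real m * expectation (\<lambda>\<omega>. N (W0 \<omega>))\<bar>} \<le> g n)"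
    apply (rule gen)
      apply (simp add: N_def)
     apply (simp add: N_def)
    apply (simp add: N_def)
    done
  from exN obtain gN where gN: "gN \<longlonglongrightarrow> 0 \<and> (\<forall>n Is. (\<forall>m\<le>n. Is m \<subseteq> J \<and> finite (Is m) \<and> card (Is m) = m) \<and>
            (\<forall>a c. a \<le> c \<longrightarrow> c \<le> n \<longrightarrow> Is a \<subseteq> Is c) \<longrightarrow>
         prob {\<omega>\<in>space M. \<exists>m. \<gamma> * real n \<le> real m \<and> m \<le> n \<and>
                 \<eta> / 2 * real m < \<bar>(\<Sum>i\<in>Is m. N (W i \<omega>)) - real m * expectation (\<lambda>\<omega>. N (W0 \<omega>))\<bar>} \<le> gN n)" ..
  note gN1 = conjunct1[OF gN] and gN2 = conjunct2[OF gN]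
  have mean: "expectation W0 = expectation (\<lambda>\<omega>. P (W0 \<omega>)) - expectation (\<lambda>\<omega>. N (W0 \<omega>))"
  proof -
    have "expectation W0 = expectation (\<lambda>\<omega>. P (W0 \<omega>) - N (W0 \<omega>))" using PN by metis
    also have "\<dots> = expectation (\<lambda>\<omega>. P (W0 \<omega>)) - expectation (\<lambda>\<omega>. N (W0 \<omega>))"
      using intP intN by simp
    finally show ?thesis .
  qed
  have bound: "prob {\<omega>\<in>space M. \<exists>m. \<gamma> * real n \<le> real m \<and> m \<le> n \<and>
                 \<eta> * real m < \<bar>(\<Sum>i\<in>Is m. W i \<omega>) - real m * expectation W0\<bar>} \<le> gP n + gN n"
    if Is: "\<forall>m\<le>n. Is m \<subseteq> J \<and> finite (Is m) \<and> card (Is m) = m"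
      and nest: "\<forall>a c. a \<le> c \<longrightarrow> c \<le> n \<longrightarrow> Is a \<subseteq> Is c" for n Is
  proof -
    define S where "S = {m. \<gamma> * real n \<le> real m \<and> m \<le> n}"
    have finS: "finite S" unfolding S_def by auto
    have measS: "(\<lambda>\<omega>. \<Sum>i\<in>Is m. F (W i \<omega>)) \<in> borel_measurable M"
      if "m \<in> S" "F \<in> borel_measurable borel" for m and F :: "real \<Rightarrow> real"
    proof -
      have "(\<lambda>\<omega>. F (W i \<omega>)) \<in> borel_measurable M" if i: "i \<in> Is m" for i
      proof -
        have "i \<in> J" using Is \<open>m \<in> S\<close> i unfolding S_def by auto
        then have "W i \<in> borel_measurable M" by (rule measW)
        from measurable_compose[OF this \<open>F \<in> borel_measurable borel\<close>] show ?thesis .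
      qed
      then show ?thesis by (intro borel_measurable_sum[where f="\<lambda>i \<omega>. F (W i \<omega>)"]) simp
    qed
    define EP where "EP = {\<omega>\<in>space M. \<exists>m\<in>S.
                 \<eta> / 2 * real m < \<bar>(\<Sum>i\<in>Is m. P (W i \<omega>)) - real m * expectation (\<lambda>\<omega>. P (W0 \<omega>))\<bar>}"
    define EN where "EN = {\<omega>\<in>space M. \<exists>m\<in>S.
                 \<eta> / 2 * real m < \<bar>(\<Sum>i\<in>Is m. N (W i \<omega>)) - real m * expectation (\<lambda>\<omega>. N (W0 \<omega>))\<bar>}"
    have EPs: "EP \<in> sets M" unfolding EP_def
    proof (rule finite_ex_sets[OF finS])
      fix m assume "m \<in> S"
      from measS[OF this, of P] show "{\<omega> \<in> space M. \<eta> / 2 * real m < \<bar>(\<Sum>i\<in>Is m. P (W i \<omega>)) - real m * expectation (\<lambda>\<omega>. P (W0 \<omega>))\<bar>} \<in> sets M"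
        by measurable
    qed
    have ENs: "EN \<in> sets M" unfolding EN_def
    proof (rule finite_ex_sets[OF finS])
      fix m assume "m \<in> S"
      from measS[OF this, of N] show "{\<omega> \<in> space M. \<eta> / 2 * real m < \<bar>(\<Sum>i\<in>Is m. N (W i \<omega>)) - real m * expectation (\<lambda>\<omega>. N (W0 \<omega>))\<bar>} \<in> sets M"
        by measurable
    qed
    have sub: "{\<omega>\<in>space M. \<exists>m. \<gamma> * real n \<le> real m \<and> m \<le> n \<and>
                 \<eta> * real m < \<bar>(\<Sum>i\<in>Is m. W i \<omega>) - real m * expectation W0\<bar>} \<subseteq> EP \<union> EN"
    proof
      fix \<omega> assume "\<omega> \<in> {\<omega>\<in>space M. \<exists>m. \<gamma> * real n \<le> real m \<and> m \<le> n \<and>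
                 \<eta> * real m < \<bar>(\<Sum>i\<in>Is m. W i \<omega>) - real m * expectation W0\<bar>}"
      then obtain m where w: "\<omega> \<in> space M" and mS: "m \<in> S"
        and big: "\<eta> * real m < \<bar>(\<Sum>i\<in>Is m. W i \<omega>) - real m * expectation W0\<bar>" unfolding S_def by auto
      have "(\<Sum>i\<in>Is m. W i \<omega>) - real m * expectation W0 =
          ((\<Sum>i\<in>Is m. P (W i \<omega>)) - real m * expectation (\<lambda>\<omega>. P (W0 \<omega>)))
          - ((\<Sum>i\<in>Is m. N (W i \<omega>)) - real m * expectation (\<lambda>\<omega>. N (W0 \<omega>)))"
        unfolding mean by (subst PN) (simp add: sum_subtractf algebra_simps)
      then have "\<eta> / 2 * real m < \<bar>(\<Sum>i\<in>Is m. P (W i \<omega>)) - real m * expectation (\<lambda>\<omega>. P (W0 \<omega>))\<bar> \<or>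
                 \<eta> / 2 * real m < \<bar>(\<Sum>i\<in>Is m. N (W i \<omega>)) - real m * expectation (\<lambda>\<omega>. N (W0 \<omega>))\<bar>"
        using big by linarith
      then show "\<omega> \<in> EP \<union> EN" unfolding EP_def EN_def using w mS by auto
    qed
    have "prob {\<omega>\<in>space M. \<exists>m. \<gamma> * real n \<le> real m \<and> m \<le> n \<and>
                 \<eta> * real m < \<bar>(\<Sum>i\<in>Is m. W i \<omega>) - real m * expectation W0\<bar>} \<le> prob (EP \<union> EN)"
      using sub EPs ENs by (intro finite_measure_mono) auto
    also have "\<dots> \<le> prob EP + prob EN" using EPs ENs by (rule measure_Un_le)
    also have "prob EP \<le> gP n" using gP2[rule_format, OF conjI[OF Is nest]] unfolding EP_def S_def by (smt (verit) Collect_cong mem_Collect_eq)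
    also have "prob EN \<le> gN n" using gN2[rule_format, OF conjI[OF Is nest]] unfolding EN_def S_def by (smt (verit) Collect_cong mem_Collect_eq)
    finally show ?thesis by simp
  qed
  have "(\<lambda>n. gP n + gN n) \<longlonglongrightarrow> 0" using tendsto_add[OF gP1 gN1] by simp
  then show ?thesis using bound by blast
qed




lemma dot_e: "v \<bullet> e \<theta> = fst v * cos \<theta> + snd v * sin \<theta>"
  by (cases v) (simp add: e_def)

lemma ex_minimizer:
  fixes P :: "nat \<Rightarrow> real \<times> real" and n :: nat
  shows "\<exists>j\<le>n. \<forall>k\<le>n. P j \<bullet> e \<theta> \<le> P k \<bullet> e \<theta>"
proof -
  have "Min ((\<lambda>j. P j \<bullet> e \<theta>) ` {..n}) \<in> (\<lambda>j. P j \<bullet> e \<theta>) ` {..n}" by (intro Min_in) auto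
  then obtain j where j: "j \<le> n" "Min ((\<lambda>j. P j \<bullet> e \<theta>) ` {..n}) = P j \<bullet> e \<theta>"
    by (metis (no_types, lifting) atMost_iff imageE)
  have "\<forall>k\<le>n. P j \<bullet> e \<theta> \<le> P k \<bullet> e \<theta>" unfolding j(2)[symmetric] by (auto intro: Min_le)
  then show ?thesis using j by blast
qed

lemma ex_maximizer:
  fixes P :: "nat \<Rightarrow> real \<times> real" and n :: nat
  shows "\<exists>j\<le>n. \<forall>k\<le>n. P k \<bullet> e \<theta> \<le> P j \<bullet> e \<theta>"
proof -
  have "Max ((\<lambda>j. P j \<bullet> e \<theta>) ` {..n}) \<in> (\<lambda>j. P j \<bullet> e \<theta>) ` {..n}" by (intro Max_in) auto
  then obtain j where j: "j \<le> n" "Max ((\<lambda>j. P j \<bullet> e \<theta>) ` {..n}) = P j \<bullet> e \<theta>"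
    by (metis (no_types, lifting) atMost_iff imageE)
  have "\<forall>k\<le>n. P k \<bullet> e \<theta> \<le> P j \<bullet> e \<theta>" unfolding j(2)[symmetric] by (auto intro: Max_ge)
  then show ?thesis using j by blast
qed

lemma Jmin_prop: "Jmin P n \<theta> \<le> n \<and> (\<forall>k\<le>n. P (Jmin P n \<theta>) \<bullet> e \<theta> \<le> P k \<bullet> e \<theta>)"
  unfolding Jmin_def using ex_minimizer[of n P \<theta>] by (elim exE) (rule LeastI, blast)

lemma Jmax_prop: "Jmax P n \<theta> \<le> n \<and> (\<forall>k\<le>n. P k \<bullet> e \<theta> \<le> P (Jmax P n \<theta>) \<bullet> e \<theta>)"
  unfolding Jmax_def using ex_maximizer[of n P \<theta>] by (elim exE) (rule LeastI, blast)

lemma Jmin_le: "j \<le> n \<Longrightarrow> (\<forall>k\<le>n. P j \<bullet> e \<theta> \<le> P k \<bullet> e \<theta>) \<Longrightarrow> Jmin P n \<theta> \<le> j"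
  unfolding Jmin_def by (rule Least_le) blast

lemma Jmax_le: "j \<le> n \<Longrightarrow> (\<forall>k\<le>n. P k \<bullet> e \<theta> \<le> P j \<bullet> e \<theta>) \<Longrightarrow> Jmax P n \<theta> \<le> j"
  unfolding Jmax_def by (rule Least_le) blast

lemma Jmin_less_iff: "real (Jmin P n \<theta>) < c \<longleftrightarrow> (\<exists>j\<le>n. real j < c \<and> (\<forall>k\<le>n. P j \<bullet> e \<theta> \<le> P k \<bullet> e \<theta>))"
proof
  assume "real (Jmin P n \<theta>) < c" then show "\<exists>j\<le>n. real j < c \<and> (\<forall>k\<le>n. P j \<bullet> e \<theta> \<le> P k \<bullet> e \<theta>)"
    using Jmin_prop[of P n \<theta>] by blast
next
  assume "\<exists>j\<le>n. real j < c \<and> (\<forall>k\<le>n. P j \<bullet> e \<theta> \<le> P k \<bullet> e \<theta>)"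
  then obtain j where "j \<le> n" "real j < c" "\<forall>k\<le>n. P j \<bullet> e \<theta> \<le> P k \<bullet> e \<theta>" by blast
  then have "Jmin P n \<theta> \<le> j" by (intro Jmin_le)
  then show "real (Jmin P n \<theta>) < c" using \<open>real j < c\<close> by linarith
qed

lemma Jmax_greater_iff: "c < real (Jmax P n \<theta>) \<longleftrightarrow> (\<forall>j\<le>n. real j \<le> c \<longrightarrow> (\<exists>k\<le>n. P j \<bullet> e \<theta> < P k \<bullet> e \<theta>))"
proof
  assume a: "c < real (Jmax P n \<theta>)"
  show "\<forall>j\<le>n. real j \<le> c \<longrightarrow> (\<exists>k\<le>n. P j \<bullet> e \<theta> < P k \<bullet> e \<theta>)"
  proof (intro allI impI)
    fix j assume j: "j \<le> n" "real j \<le> c"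
    show "\<exists>k\<le>n. P j \<bullet> e \<theta> < P k \<bullet> e \<theta>"
    proof (rule ccontr)
      assume "\<not> ?thesis"
      then have "\<forall>k\<le>n. P k \<bullet> e \<theta> \<le> P j \<bullet> e \<theta>" by (auto simp: not_less)
      then have "Jmax P n \<theta> \<le> j" using j by (intro Jmax_le)
      then show False using a j by linarith
    qed
  qed
next
  assume a: "\<forall>j\<le>n. real j \<le> c \<longrightarrow> (\<exists>k\<le>n. P j \<bullet> e \<theta> < P k \<bullet> e \<theta>)"
  show "c < real (Jmax P n \<theta>)"
  proof (rule ccontr)
    assume "\<not> ?thesis"
    then have "real (Jmax P n \<theta>) \<le> c" by simp
    then obtain k where "k \<le> n" "P (Jmax P n \<theta>) \<bullet> e \<theta> < P k \<bullet> e \<theta>"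
      using a Jmax_prop[of P n \<theta>] by blast
    then show False using Jmax_prop[of P n \<theta>] by fastforce
  qed
qed

lemma Min_at: "(MIN j\<in>{0..n}. P j \<bullet> e \<theta>) = P (Jmin P n \<theta>) \<bullet> e \<theta>"
  using Jmin_prop[of P n \<theta>] by (intro Min_eqI) auto

lemma Max_at: "(MAX j\<in>{0..n}. P j \<bullet> e \<theta>) = P (Jmax P n \<theta>) \<bullet> e \<theta>"
  using Jmax_prop[of P n \<theta>] by (intro Max_eqI) auto

lemma walk_res_less: "j < i \<Longrightarrow> walk_res Z Z' i j \<omega> = walk Z j \<omega>"
  unfolding walk_res_def by simp

lemma walk_res_ge: "i \<le> j \<Longrightarrow> walk_res Z Z' i j \<omega> \<bullet> e \<theta> = walk Z j \<omega> \<bullet> e \<theta> - (Z i \<omega> - Z' i \<omega>) \<bullet> e \<theta>"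
  unfolding walk_res_def by (simp add: inner_diff_left inner_add_left)

lemma part_i_det:
  assumes i: "i \<in> Iset n \<gamma>" and w: "\<omega> \<in> Ev M Z Z' n i \<delta> \<gamma>" and th: "\<theta> \<in> {\<delta>..pi - \<delta>}"
  shows "Delta Z Z' n i \<theta> \<omega> = (Z i \<omega> - Z' i \<omega>) \<bullet> e \<theta>"
proof -
  define S where "S j = walk Z j \<omega>" for j
  define S' where "S' j = walk_res Z Z' i j \<omega>" for j
  define d where "d = (Z i \<omega> - Z' i \<omega>) \<bullet> e \<theta>"
  have i1: "\<gamma> * real n \<le> real i" "real i \<le> (1 - \<gamma>) * real n" using i unfolding Iset_def by auto
  have c: "real (Jmin S n \<theta>) < \<gamma> * real n" "(1 - \<gamma>) * real n < real (Jmax S n \<theta>)"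
     "real (Jmin S' n \<theta>) < \<gamma> * real n" "(1 - \<gamma>) * real n < real (Jmax S' n \<theta>)"
    using w th unfolding Ev_def S_def S'_def by auto
  define a where "a = Jmin S n \<theta>"
  define a' where "a' = Jmin S' n \<theta>"
  define b where "b = Jmax S n \<theta>"
  define b' where "b' = Jmax S' n \<theta>"
  have ai: "a < i" "a' < i" using c(1,3) i1 unfolding a_def a'_def by linarith+
  have bi: "i \<le> b" "i \<le> b'" using c(2,4) i1 unfolding b_def b'_def by linarith+
  have pa: "a \<le> n" "\<forall>k\<le>n. S a \<bullet> e \<theta> \<le> S k \<bullet> e \<theta>" using Jmin_prop[of S n \<theta>] unfolding a_def by auto
  have pa': "a' \<le> n" "\<forall>k\<le>n. S' a' \<bullet> e \<theta> \<le> S' k \<bullet> e \<theta>" using Jmin_prop[of S' n \<theta>] unfolding a'_def by auto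
  have pb: "b \<le> n" "\<forall>k\<le>n. S k \<bullet> e \<theta> \<le> S b \<bullet> e \<theta>" using Jmax_prop[of S n \<theta>] unfolding b_def by auto
  have pb': "b' \<le> n" "\<forall>k\<le>n. S' k \<bullet> e \<theta> \<le> S' b' \<bullet> e \<theta>" using Jmax_prop[of S' n \<theta>] unfolding b'_def by auto
  have Sa: "S' a = S a" "S' a' = S a'" using ai unfolding S_def S'_def by (simp_all add: walk_res_less)
  have Sb: "S' b \<bullet> e \<theta> = S b \<bullet> e \<theta> - d" "S' b' \<bullet> e \<theta> = S b' \<bullet> e \<theta> - d"
    using bi unfolding S_def S'_def d_def by (simp_all add: walk_res_ge)
  have min_eq: "S a \<bullet> e \<theta> = S' a' \<bullet> e \<theta>"
    using pa(2)[rule_format, OF pa'(1)] pa'(2)[rule_format, OF pa(1)] Sa by auto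
  have max_eq: "S b \<bullet> e \<theta> = S b' \<bullet> e \<theta>"
    using pb(2)[rule_format, OF pb'(1)] pb'(2)[rule_format, OF pb(1)] Sb by auto
  have "Delta Z Z' n i \<theta> \<omega> = (S b \<bullet> e \<theta> - S a \<bullet> e \<theta>) - (S' b' \<bullet> e \<theta> - S' a' \<bullet> e \<theta>)"
    unfolding Delta_def Rng_def S_def[symmetric] S'_def[symmetric]
    unfolding Min_at Max_at a_def a'_def b_def b'_def ..
  also have "\<dots> = d" using min_eq max_eq Sb by simp
  finally show ?thesis unfolding d_def .
qed

lemma part_i:
  assumes "i \<in> Iset n \<gamma>"
  shows "\<forall>\<theta>\<in>{\<delta>..pi - \<delta>}.
               Delta Z Z' n i \<theta> \<omega> * indicator (Ev M Z Z' n i \<delta> \<gamma>) \<omega>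
               = ((Z i \<omega> - Z' i \<omega>) \<bullet> e \<theta>) * indicator (Ev M Z Z' n i \<delta> \<gamma>) \<omega>"
proof
  fix \<theta> assume th: "\<theta> \<in> {\<delta>..pi - \<delta>}"
  show "Delta Z Z' n i \<theta> \<omega> * indicator (Ev M Z Z' n i \<delta> \<gamma>) \<omega>
               = ((Z i \<omega> - Z' i \<omega>) \<bullet> e \<theta>) * indicator (Ev M Z Z' n i \<delta> \<gamma>) \<omega>"
  proof (cases "\<omega> \<in> Ev M Z Z' n i \<delta> \<gamma>")
    case True
    then show ?thesis using part_i_det[OF assms True th] by simp
  qed simp
qed

lemma sin_ge_delta:
  assumes "0 < \<delta>" "\<delta> < pi/2" "\<theta> \<in> {\<delta>..pi - \<delta>}"
  shows "sin \<delta> \<le> sin \<theta>"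
proof (cases "\<theta> \<le> pi/2")
  case True
  then show ?thesis using assms by (intro sin_monotone_2pi_le) auto
next
  case False
  have "sin \<delta> \<le> sin (pi - \<theta>)" using assms False by (intro sin_monotone_2pi_le) auto
  then show ?thesis by simp
qed

lemma dot_pos:
  assumes \<delta>: "0 < \<delta>" "\<delta> < pi/2" and th: "\<theta> \<in> {\<delta>..pi - \<delta>}" and \<mu>: "\<mu> > 0" and m: "m > 0"
    and x: "\<bar>fst v\<bar> \<le> \<mu> * sin \<delta> / 4 * m" and y: "\<mu> / 2 * m \<le> snd v"
  shows "v \<bullet> e \<theta> > 0"
proof -
  have sd: "sin \<delta> > 0" using \<delta> by (intro sin_gt_zero) auto
  have st: "sin \<delta> \<le> sin \<theta>" by (rule sin_ge_delta[OF \<delta> th])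
  have "- \<bar>fst v\<bar> \<le> fst v * cos \<theta>"
  proof -
    have "\<bar>fst v * cos \<theta>\<bar> \<le> \<bar>fst v\<bar>" using abs_cos_le_one[of \<theta>] by (simp add: abs_mult mult_left_le)
    then show ?thesis by linarith
  qed
  moreover have "snd v * sin \<delta> \<le> snd v * sin \<theta>"
  proof -
    have "0 < \<mu> / 2 * m" using \<mu> m by simp
    then have "0 \<le> snd v" using y by linarith
    then show ?thesis by (rule mult_left_mono[OF st])
  qed
  moreover have "\<mu> / 2 * m * sin \<delta> \<le> snd v * sin \<delta>" using y sd by (intro mult_right_mono) auto
  moreover have "\<mu> * sin \<delta> / 4 * m < \<mu> / 2 * m * sin \<delta>" using \<mu> m sd by (simp add: field_simps)
  ultimately show ?thesis unfolding dot_e using x by linarith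
qed



lemma dense_rat_interval:
  fixes a b :: real assumes "a < b"
  shows "{a..b} \<subseteq> closure ({a..b} \<inter> \<rat>)"
proof
  fix x assume x: "x \<in> {a..b}"
  show "x \<in> closure ({a..b} \<inter> \<rat>)"
    unfolding closure_approachable
  proof (intro allI impI)
    fix e :: real assume e: "e > 0"
    have "max a (x - e) < min b (x + e)" using x e assms by auto
    then obtain r where r: "r \<in> \<rat>" "max a (x - e) < r" "r < min b (x + e)"
      using Rats_dense_in_real by blast
    then have "r \<in> {a..b} \<inter> \<rat>" "dist r x < e" by (auto simp: dist_real_def)
    then show "\<exists>y\<in>{a..b} \<inter> \<rat>. dist y x < e" by blast
  qed
qed

lemma (in prob_space) meas_forall_closed:
  fixes Q :: "'a \<Rightarrow> real \<Rightarrow> bool"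
  assumes ab: "a < b"
    and mQ: "\<And>\<theta>. {\<omega>\<in>space M. Q \<omega> \<theta>} \<in> sets M"
    and cQ: "\<And>\<omega>. \<omega> \<in> space M \<Longrightarrow> closed {\<theta>. Q \<omega> \<theta>}"
  shows "{\<omega>\<in>space M. \<forall>\<theta>\<in>{a..b}. Q \<omega> \<theta>} \<in> sets M"
proof -
  have eq: "{\<omega>\<in>space M. \<forall>\<theta>\<in>{a..b}. Q \<omega> \<theta>} = {\<omega>\<in>space M. \<forall>\<theta>\<in>{a..b} \<inter> \<rat>. Q \<omega> \<theta>}"
  proof (intro Collect_cong conj_cong refl iffI)
    fix \<omega> assume w: "\<omega> \<in> space M" and q: "\<forall>\<theta>\<in>{a..b} \<inter> \<rat>. Q \<omega> \<theta>"
    have "{a..b} \<inter> \<rat> \<subseteq> {\<theta>. Q \<omega> \<theta>}" using q by auto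
    then have "closure ({a..b} \<inter> \<rat>) \<subseteq> {\<theta>. Q \<omega> \<theta>}" using cQ[OF w] by (rule closure_minimal)
    then show "\<forall>\<theta>\<in>{a..b}. Q \<omega> \<theta>" using dense_rat_interval[OF ab] by auto
  qed auto
  have "countable ({a..b} \<inter> \<rat>)" using countable_rat by (rule countable_Int2)
  then show ?thesis unfolding eq by (intro sets.sets_Collect_countable_All' mQ)
qed

lemma continuous_on_Max_fin:
  fixes f :: "'k \<Rightarrow> real \<Rightarrow> real"
  assumes "finite B" "B \<noteq> {}" "\<And>k. k \<in> B \<Longrightarrow> continuous_on S (f k)"
  shows "continuous_on S (\<lambda>x. Max ((\<lambda>k. f k x) ` B))"
  using assms
proof (induction B rule: finite_ne_induct)
  case (singleton k)
  then show ?case by simp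
next
  case (insert k F)
  have eq: "(\<lambda>x. Max ((\<lambda>k. f k x) ` insert k F)) = (\<lambda>x. max (f k x) (Max ((\<lambda>k. f k x) ` F)))"
    using insert.hyps by (auto intro!: ext Max_insert)
  have "continuous_on S (\<lambda>x. max (f k x) (Max ((\<lambda>k. f k x) ` F)))"
    using insert by (intro continuous_on_max) auto
  then show ?case unfolding eq .
qed

lemma (in prob_space) meas_forall_open:
  fixes h :: "'a \<Rightarrow> 'k \<Rightarrow> real \<Rightarrow> real"
  assumes ab: "a < b" and fB: "finite B" and nB: "B \<noteq> {}"
    and mh: "\<And>k \<theta>. k \<in> B \<Longrightarrow> (\<lambda>\<omega>. h \<omega> k \<theta>) \<in> borel_measurable M"
    and ch: "\<And>\<omega> k. k \<in> B \<Longrightarrow> continuous_on UNIV (h \<omega> k)"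
  shows "{\<omega>\<in>space M. \<forall>\<theta>\<in>{a..b}. \<exists>k\<in>B. h \<omega> k \<theta> > 0} \<in> sets M"
proof -
  have eq: "{\<omega>\<in>space M. \<forall>\<theta>\<in>{a..b}. \<exists>k\<in>B. h \<omega> k \<theta> > 0} =
     {\<omega>\<in>space M. \<exists>r\<in>\<rat> \<inter> {0<..}. \<forall>\<theta>\<in>{a..b}. \<exists>k\<in>B. h \<omega> k \<theta> \<ge> r}"
  proof (intro Collect_cong conj_cong refl iffI)
    fix \<omega> assume w: "\<omega> \<in> space M" and pos: "\<forall>\<theta>\<in>{a..b}. \<exists>k\<in>B. h \<omega> k \<theta> > 0"
    define H where "H \<theta> = Max ((\<lambda>k. h \<omega> k \<theta>) ` B)" for \<theta>
    have cH: "continuous_on {a..b} H" unfolding H_def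
      using fB nB ch by (intro continuous_on_Max_fin) (auto intro: continuous_on_subset)
    obtain x where x: "x \<in> {a..b}" "\<forall>y\<in>{a..b}. H x \<le> H y"
      using continuous_attains_inf[OF compact_Icc _ cH] ab by auto
    obtain k where k: "k \<in> B" "h \<omega> k x > 0" using pos x(1) by blast
    have "h \<omega> k x \<le> H x" unfolding H_def using fB k(1) by (intro Max_ge) auto
    then have Hx: "H x > 0" using k by linarith
    obtain r where r: "r \<in> \<rat>" "0 < r" "r < H x" using Rats_dense_in_real[OF Hx] by blast
    have "\<forall>\<theta>\<in>{a..b}. \<exists>k\<in>B. h \<omega> k \<theta> \<ge> r"
    proof
      fix \<theta> assume th: "\<theta> \<in> {a..b}"
      have "H \<theta> \<in> (\<lambda>k. h \<omega> k \<theta>) ` B" unfolding H_def using fB nB by (intro Max_in) auto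
      then obtain k where "k \<in> B" "H \<theta> = h \<omega> k \<theta>" by auto
      moreover have "H x \<le> H \<theta>" using x th by blast
      ultimately show "\<exists>k\<in>B. h \<omega> k \<theta> \<ge> r" using r by force
    qed
    then show "\<exists>r\<in>\<rat> \<inter> {0<..}. \<forall>\<theta>\<in>{a..b}. \<exists>k\<in>B. h \<omega> k \<theta> \<ge> r" using r by blast
  next
    fix \<omega> assume "\<exists>r\<in>\<rat> \<inter> {0<..}. \<forall>\<theta>\<in>{a..b}. \<exists>k\<in>B. h \<omega> k \<theta> \<ge> r"
    then show "\<forall>\<theta>\<in>{a..b}. \<exists>k\<in>B. h \<omega> k \<theta> > 0" by force
  qed
  have cnt: "countable (\<rat> \<inter> {0<..})" using countable_rat by (rule countable_Int1)
  show ?thesis unfolding eq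
  proof (rule sets.sets_Collect_countable_Ex'[OF meas_forall_closed[OF ab] cnt])
    fix r :: real and \<theta>
    show "{\<omega> \<in> space M. \<exists>k\<in>B. r \<le> h \<omega> k \<theta>} \<in> sets M"
    proof (rule sets.sets_Collect_countable_Ex')
      fix k assume "k \<in> B"
      from mh[OF this, of \<theta>] show "{\<omega> \<in> space M. r \<le> h \<omega> k \<theta>} \<in> sets M" by measurable
    next
      show "countable B" using fB by (rule countable_finite)
    qed
  next
    fix r :: real and \<omega>
    have "{\<theta>. \<exists>k\<in>B. r \<le> h \<omega> k \<theta>} = (\<Union>k\<in>B. {\<theta>. r \<le> h \<omega> k \<theta>})" by auto
    also have "closed \<dots>" using fB ch by (intro closed_UN ballI closed_Collect_le) auto
    finally show "closed {\<theta>. \<exists>k\<in>B. r \<le> h \<omega> k \<theta>}" .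
  qed
qed




lemma cont_dot: "continuous_on UNIV (\<lambda>\<theta>. v \<bullet> e \<theta>)"
  unfolding dot_e by (intro continuous_intros)

lemma (in prob_space) meas_Jmin_cond:
  fixes P :: "'a \<Rightarrow> nat \<Rightarrow> real \<times> real"
  assumes mP: "\<And>j. (\<lambda>\<omega>. P \<omega> j) \<in> borel_measurable M" and ab: "a < b"
  shows "{\<omega>\<in>space M. \<forall>\<theta>\<in>{a..b}. real (Jmin (P \<omega>) n \<theta>) < c} \<in> sets M"
proof -
  have eq: "{\<omega>\<in>space M. \<forall>\<theta>\<in>{a..b}. real (Jmin (P \<omega>) n \<theta>) < c} =
    {\<omega>\<in>space M. \<forall>\<theta>\<in>{a..b}. \<exists>j\<in>{..n}. real j < c \<and> (\<forall>k\<in>{..n}. P \<omega> j \<bullet> e \<theta> \<le> P \<omega> k \<bullet> e \<theta>)}"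
    by (simp only: Jmin_less_iff Bex_def Ball_def atMost_iff)
  show ?thesis unfolding eq
  proof (rule meas_forall_closed[OF ab])
    fix \<theta>
    show "{\<omega> \<in> space M. \<exists>j\<in>{..n}. real j < c \<and> (\<forall>k\<in>{..n}. P \<omega> j \<bullet> e \<theta> \<le> P \<omega> k \<bullet> e \<theta>)} \<in> sets M"
    proof (rule sets.sets_Collect_countable_Ex')
      fix j
      show "{\<omega> \<in> space M. real j < c \<and> (\<forall>k\<in>{..n}. P \<omega> j \<bullet> e \<theta> \<le> P \<omega> k \<bullet> e \<theta>)} \<in> sets M"
      proof (rule sets.sets_Collect_conj)
        show "{\<omega> \<in> space M. real j < c} \<in> sets M" by (rule sets.sets_Collect_const)
        show "{\<omega> \<in> space M. \<forall>k\<in>{..n}. P \<omega> j \<bullet> e \<theta> \<le> P \<omega> k \<bullet> e \<theta>} \<in> sets M"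
        proof (rule sets.sets_Collect_countable_All')
          fix k
          have [measurable]: "(\<lambda>\<omega>. P \<omega> j) \<in> borel_measurable M" "(\<lambda>\<omega>. P \<omega> k) \<in> borel_measurable M"
            by (rule mP)+
          show "{\<omega> \<in> space M. P \<omega> j \<bullet> e \<theta> \<le> P \<omega> k \<bullet> e \<theta>} \<in> sets M" by measurable
        qed simp
      qed
    qed simp
  next
    fix \<omega>
    have "{\<theta>. \<exists>j\<in>{..n}. real j < c \<and> (\<forall>k\<in>{..n}. P \<omega> j \<bullet> e \<theta> \<le> P \<omega> k \<bullet> e \<theta>)} =
      (\<Union>j\<in>{j\<in>{..n}. real j < c}. \<Inter>k\<in>{..n}. {\<theta>. P \<omega> j \<bullet> e \<theta> \<le> P \<omega> k \<bullet> e \<theta>})" by auto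
    also have "closed \<dots>"
      by (intro closed_UN closed_INT ballI closed_Collect_le cont_dot) auto
    finally show "closed {\<theta>. \<exists>j\<in>{..n}. real j < c \<and> (\<forall>k\<in>{..n}. P \<omega> j \<bullet> e \<theta> \<le> P \<omega> k \<bullet> e \<theta>)}" .
  qed
qed

lemma (in prob_space) meas_Jmax_cond:
  fixes P :: "'a \<Rightarrow> nat \<Rightarrow> real \<times> real"
  assumes mP: "\<And>j. (\<lambda>\<omega>. P \<omega> j) \<in> borel_measurable M" and ab: "a < b"
  shows "{\<omega>\<in>space M. \<forall>\<theta>\<in>{a..b}. c < real (Jmax (P \<omega>) n \<theta>)} \<in> sets M"
proof -
  have eq: "{\<omega>\<in>space M. \<forall>\<theta>\<in>{a..b}. c < real (Jmax (P \<omega>) n \<theta>)} =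
    {\<omega>\<in>space M. \<forall>j\<in>{j\<in>{..n}. real j \<le> c}. \<forall>\<theta>\<in>{a..b}. \<exists>k\<in>{..n}. P \<omega> k \<bullet> e \<theta> - P \<omega> j \<bullet> e \<theta> > 0}"
    by (simp only: Jmax_greater_iff Bex_def Ball_def atMost_iff mem_Collect_eq diff_gt_0_iff_gt) blast
  show ?thesis unfolding eq
  proof (rule sets.sets_Collect_countable_All')
    fix j
    show "{\<omega> \<in> space M. \<forall>\<theta>\<in>{a..b}. \<exists>k\<in>{..n}. P \<omega> k \<bullet> e \<theta> - P \<omega> j \<bullet> e \<theta> > 0} \<in> sets M"
    proof (rule meas_forall_open[OF ab])
      fix k \<theta>
      have [measurable]: "(\<lambda>\<omega>. P \<omega> j) \<in> borel_measurable M" "(\<lambda>\<omega>. P \<omega> k) \<in> borel_measurable M"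
        by (rule mP)+
      show "(\<lambda>\<omega>. P \<omega> k \<bullet> e \<theta> - P \<omega> j \<bullet> e \<theta>) \<in> borel_measurable M" by measurable
    next
      fix \<omega> k
      show "continuous_on UNIV (\<lambda>\<theta>. P \<omega> k \<bullet> e \<theta> - P \<omega> j \<bullet> e \<theta>)"
        by (intro continuous_on_diff cont_dot)
    qed auto
  qed simp
qed

lemma walk_meas:
  assumes "\<And>i. i \<ge> 1 \<Longrightarrow> Z i \<in> borel_measurable M"
  shows "(\<lambda>\<omega>. walk Z j \<omega>) \<in> borel_measurable M"
  unfolding walk_def using assms by (intro borel_measurable_sum) auto

lemma walk_res_meas:
  assumes "\<And>i. i \<ge> 1 \<Longrightarrow> Z i \<in> borel_measurable M" "\<And>i. i \<ge> 1 \<Longrightarrow> Z' i \<in> borel_measurable M"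
    and "i \<ge> 1"
  shows "(\<lambda>\<omega>. walk_res Z Z' i j \<omega>) \<in> borel_measurable M"
proof -
  have [measurable]: "(\<lambda>\<omega>. walk Z j \<omega>) \<in> borel_measurable M" by (rule walk_meas[OF assms(1)])
  have [measurable]: "Z i \<in> borel_measurable M" "Z' i \<in> borel_measurable M" using assms by auto
  show ?thesis unfolding walk_res_def by measurable
qed

lemma (in prob_space) Ev_sets:
  assumes meas: "\<And>i. i \<ge> 1 \<Longrightarrow> Z i \<in> borel_measurable M"
    and meas': "\<And>i. i \<ge> 1 \<Longrightarrow> Z' i \<in> borel_measurable M"
    and i: "i \<ge> 1" and \<delta>: "0 < \<delta>" "\<delta> < pi/2"
  shows "Ev M Z Z' n i \<delta> \<gamma> \<in> sets M"
proof -
  have ab: "\<delta> < pi - \<delta>" using \<delta> by simp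
  have m1: "\<And>j. (\<lambda>\<omega>. walk Z j \<omega>) \<in> borel_measurable M" by (rule walk_meas[OF meas])
  have m2: "\<And>j. (\<lambda>\<omega>. walk_res Z Z' i j \<omega>) \<in> borel_measurable M" by (rule walk_res_meas[OF meas meas' i])
  have "Ev M Z Z' n i \<delta> \<gamma> =
    {\<omega>\<in>space M. (\<forall>\<theta>\<in>{\<delta>..pi - \<delta>}. real (Jmin (\<lambda>j. walk Z j \<omega>) n \<theta>) < \<gamma> * real n) \<and>
      (\<forall>\<theta>\<in>{\<delta>..pi - \<delta>}. (1 - \<gamma>) * real n < real (Jmax (\<lambda>j. walk Z j \<omega>) n \<theta>)) \<and>
      (\<forall>\<theta>\<in>{\<delta>..pi - \<delta>}. real (Jmin (\<lambda>j. walk_res Z Z' i j \<omega>) n \<theta>) < \<gamma> * real n) \<and>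
      (\<forall>\<theta>\<in>{\<delta>..pi - \<delta>}. (1 - \<gamma>) * real n < real (Jmax (\<lambda>j. walk_res Z Z' i j \<omega>) n \<theta>))}"
    unfolding Ev_def by auto
  also have "\<dots> \<in> sets M"
    by (intro sets.sets_Collect_conj meas_Jmin_cond[OF _ ab] meas_Jmax_cond[OF _ ab] m1 m2)
  finally show ?thesis .
qed




definition UU :: "(nat \<Rightarrow> 'a \<Rightarrow> real \<times> real) \<Rightarrow> (nat \<Rightarrow> 'a \<Rightarrow> real \<times> real) \<Rightarrow> nat + nat \<Rightarrow> 'a \<Rightarrow> real \<times> real" where
  "UU Z Z' u = (case u of Inl k \<Rightarrow> Z k | Inr k \<Rightarrow> Z' k)"

definition JJ :: "(nat + nat) set" where "JJ = Inl ` {1..} \<union> Inr ` {1..}"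

definition I1 :: "nat \<Rightarrow> (nat + nat) set" where "I1 m = Inl ` {1..m}"
definition I2 :: "nat \<Rightarrow> nat \<Rightarrow> (nat + nat) set" where "I2 n m = Inl ` {n - m + 1..n}"
definition I3 :: "nat \<Rightarrow> nat \<Rightarrow> (nat + nat) set" where
  "I3 i m = (if m < i then Inl ` {1..m} else Inl ` ({1..m} - {i}) \<union> {Inr i})"
definition I4 :: "nat \<Rightarrow> nat \<Rightarrow> nat \<Rightarrow> (nat + nat) set" where
  "I4 n i m = (if n - m < i then Inl ` ({n - m + 1..n} - {i}) \<union> {Inr i} else Inl ` {n - m + 1..n})"

lemma sum_Inl: "(\<Sum>u\<in>Inl ` A. UU Z Z' u \<omega>) = (\<Sum>k\<in>A. Z k \<omega>)"
  by (subst sum.reindex) (auto simp: UU_def inj_on_def)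

lemma card_Inl: "card (Inl ` A :: ('b + 'c) set) = card A"
  by (rule card_image) (auto simp: inj_on_def)

lemma fam_I1: "(\<forall>m\<le>n. I1 m \<subseteq> JJ \<and> finite (I1 m) \<and> card (I1 m) = m) \<and> (\<forall>a c. a \<le> c \<longrightarrow> c \<le> n \<longrightarrow> I1 a \<subseteq> I1 c)"
  unfolding I1_def JJ_def by (auto simp: card_Inl)

lemma fam_I2: "(\<forall>m\<le>n. I2 n m \<subseteq> JJ \<and> finite (I2 n m) \<and> card (I2 n m) = m) \<and> (\<forall>a c. a \<le> c \<longrightarrow> c \<le> n \<longrightarrow> I2 n a \<subseteq> I2 n c)"
  unfolding I2_def JJ_def by (auto simp: card_Inl)

lemma fam_I3: assumes "i \<ge> 1"
  shows "(\<forall>m\<le>n. I3 i m \<subseteq> JJ \<and> finite (I3 i m) \<and> card (I3 i m) = m) \<and> (\<forall>a c. a \<le> c \<longrightarrow> c \<le> n \<longrightarrow> I3 i a \<subseteq> I3 i c)"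
proof (intro conjI allI impI)
  fix m assume "m \<le> n"
  show "I3 i m \<subseteq> JJ" using assms unfolding I3_def JJ_def by auto
  show "finite (I3 i m)" unfolding I3_def by auto
  show "card (I3 i m) = m"
  proof (cases "m < i")
    case True then show ?thesis unfolding I3_def by (simp add: card_Inl)
  next
    case False
    then have "i \<in> {1..m}" using assms by auto
    then have "card (Inl ` ({1..m} - {i}) :: (nat + nat) set) = m - 1" by (simp add: card_Inl)
    moreover have "Inr i \<notin> (Inl ` ({1..m} - {i}) :: (nat + nat) set)" by auto
    ultimately show ?thesis unfolding I3_def using False assms by simp
  qed
next
  fix a c :: nat assume "a \<le> c" "c \<le> n"
  then show "I3 i a \<subseteq> I3 i c" unfolding I3_def by auto
qed

lemma fam_I4: assumes "i \<ge> 1" "i \<le> n"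
  shows "(\<forall>m\<le>n. I4 n i m \<subseteq> JJ \<and> finite (I4 n i m) \<and> card (I4 n i m) = m) \<and> (\<forall>a c. a \<le> c \<longrightarrow> c \<le> n \<longrightarrow> I4 n i a \<subseteq> I4 n i c)"
proof (intro conjI allI impI)
  fix m assume m: "m \<le> n"
  show "I4 n i m \<subseteq> JJ" using assms unfolding I4_def JJ_def by auto
  show "finite (I4 n i m)" unfolding I4_def by auto
  show "card (I4 n i m) = m"
  proof (cases "n - m < i")
    case False then show ?thesis unfolding I4_def using m by (simp add: card_Inl)
  next
    case True
    then have "i \<in> {n - m + 1..n}" using assms by auto
    then have "card (Inl ` ({n - m + 1..n} - {i}) :: (nat + nat) set) = m - 1" using m by (simp add: card_Inl)
    moreover have "Inr i \<notin> (Inl ` ({n - m + 1..n} - {i}) :: (nat + nat) set)" by auto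
    moreover have "m \<ge> 1" using True assms by auto
    ultimately show ?thesis unfolding I4_def using True by simp
  qed
next
  fix a c :: nat assume ac: "a \<le> c" "c \<le> n"
  have sub: "{n - a + 1..n} \<subseteq> {n - c + 1..n}" using ac by auto
  show "I4 n i a \<subseteq> I4 n i c"
  proof (cases "n - a < i")
    case True
    then have "n - c < i" using ac by linarith
    have "Inl ` ({n - a + 1..n} - {i}) \<subseteq> (Inl ` ({n - c + 1..n} - {i}) :: (nat + nat) set)"
      using sub by (intro image_mono Diff_mono) auto
    then show ?thesis unfolding I4_def using True \<open>n - c < i\<close> by auto
  next
    case False
    show ?thesis
    proof (cases "n - c < i")
      case True
      have "Inl ` {n - a + 1..n} \<subseteq> (Inl ` ({n - c + 1..n} - {i}) :: (nat + nat) set)"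
        using sub False by (intro image_mono) auto
      then show ?thesis unfolding I4_def using True False by auto
    next
      case False2: False
      have "Inl ` {n - a + 1..n} \<subseteq> (Inl ` {n - c + 1..n} :: (nat + nat) set)"
        using sub by (intro image_mono)
      then show ?thesis unfolding I4_def using False2 False by auto
    qed
  qed
qed

lemma walk_split: "m \<le> n \<Longrightarrow> walk Z n \<omega> = walk Z (n - m) \<omega> + (\<Sum>k\<in>{n - m + 1..n}. Z k \<omega>)"
proof -
  assume m: "m \<le> n"
  have "{1..n} = {1..n - m} \<union> {n - m + 1..n}" using m by auto
  moreover have "{1..n - m} \<inter> {n - m + 1..n} = {}" by auto
  ultimately show ?thesis unfolding walk_def by (simp add: sum.union_disjoint)
qed

lemma sum_I1: "(\<Sum>u\<in>I1 m. UU Z Z' u \<omega>) = walk Z m \<omega>"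
  unfolding I1_def sum_Inl walk_def ..

lemma sum_I2: "m \<le> n \<Longrightarrow> (\<Sum>u\<in>I2 n m. UU Z Z' u \<omega>) = walk Z n \<omega> - walk Z (n - m) \<omega>"
  unfolding I2_def sum_Inl using walk_split[of m n Z \<omega>] by simp

lemma sum_remove: "finite A \<Longrightarrow> i \<in> A \<Longrightarrow>
   (\<Sum>u\<in>Inl ` (A - {i}) \<union> {Inr i}. UU Z Z' u \<omega>) = (\<Sum>k\<in>A. Z k \<omega>) - Z i \<omega> + Z' i \<omega>"
proof -
  assume A: "finite A" "i \<in> A"
  have "(\<Sum>u\<in>Inl ` (A - {i}) \<union> {Inr i}. UU Z Z' u \<omega>) = (\<Sum>u\<in>Inl ` (A - {i}). UU Z Z' u \<omega>) + UU Z Z' (Inr i) \<omega>"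
    using A by (subst sum.union_disjoint) auto
  also have "\<dots> = (\<Sum>k\<in>A - {i}. Z k \<omega>) + Z' i \<omega>" unfolding sum_Inl by (simp add: UU_def)
  also have "(\<Sum>k\<in>A - {i}. Z k \<omega>) = (\<Sum>k\<in>A. Z k \<omega>) - Z i \<omega>" using A by (simp add: sum_diff1)
  finally show ?thesis .
qed

lemma sum_I3: "i \<ge> 1 \<Longrightarrow> (\<Sum>u\<in>I3 i m. UU Z Z' u \<omega>) = walk_res Z Z' i m \<omega>"
proof -
  assume i: "i \<ge> 1"
  show ?thesis
  proof (cases "m < i")
    case True
    then have eq: "I3 i m = Inl ` {1..m}" unfolding I3_def by simp
    show ?thesis unfolding eq sum_Inl walk_res_def walk_def using True by simp
  next
    case False
    then have im: "i \<in> {1..m}" using i by auto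
    have eq: "I3 i m = Inl ` ({1..m} - {i}) \<union> {Inr i}" unfolding I3_def using False by simp
    show ?thesis unfolding eq sum_remove[OF finite_atLeastAtMost im] walk_res_def walk_def using False by simp
  qed
qed

lemma sum_I4: "i \<ge> 1 \<Longrightarrow> i \<le> n \<Longrightarrow> m \<le> n \<Longrightarrow>
   (\<Sum>u\<in>I4 n i m. UU Z Z' u \<omega>) = walk_res Z Z' i n \<omega> - walk_res Z Z' i (n - m) \<omega>"
proof -
  assume i: "i \<ge> 1" "i \<le> n" and m: "m \<le> n"
  show ?thesis
  proof (cases "n - m < i")
    case True
    then have "i \<in> {n - m + 1..n}" using i by auto
    then have "(\<Sum>u\<in>I4 n i m. UU Z Z' u \<omega>) = (\<Sum>k\<in>{n - m + 1..n}. Z k \<omega>) - Z i \<omega> + Z' i \<omega>"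
    proof -
      assume im: "i \<in> {n - m + 1..n}"
      have eq: "I4 n i m = Inl ` ({n - m + 1..n} - {i}) \<union> {Inr i}" unfolding I4_def using True by simp
      show ?thesis unfolding eq sum_remove[OF finite_atLeastAtMost im] ..
    qed
    also have "\<dots> = walk_res Z Z' i n \<omega> - walk_res Z Z' i (n - m) \<omega>"
      unfolding walk_res_def using True i walk_split[OF m, of Z \<omega>] by simp
    finally show ?thesis .
  next
    case False
    then have eq: "I4 n i m = Inl ` {n - m + 1..n}" unfolding I4_def by simp
    show ?thesis
      unfolding eq walk_res_def sum_Inl using walk_split[OF m, of Z \<omega>] i False by simp
  qed
qed

lemma Jmin_small:
  fixes P :: "nat \<Rightarrow> real \<times> real"
  assumes P0: "P 0 = 0" and pos: "\<And>m. \<gamma> * real n \<le> real m \<Longrightarrow> m \<le> n \<Longrightarrow> P m \<bullet> e \<theta> > 0"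
  shows "real (Jmin P n \<theta>) < \<gamma> * real n"
proof (rule ccontr)
  assume "\<not> ?thesis"
  then have "\<gamma> * real n \<le> real (Jmin P n \<theta>)" by simp
  moreover have "Jmin P n \<theta> \<le> n" "P (Jmin P n \<theta>) \<bullet> e \<theta> \<le> P 0 \<bullet> e \<theta>" using Jmin_prop[of P n \<theta>] by auto
  ultimately show False using pos[of "Jmin P n \<theta>"] P0 by simp
qed

lemma Jmax_big:
  fixes P :: "nat \<Rightarrow> real \<times> real"
  assumes pos: "\<And>m. \<gamma> * real n \<le> real m \<Longrightarrow> m \<le> n \<Longrightarrow> (P n - P (n - m)) \<bullet> e \<theta> > 0"
  shows "(1 - \<gamma>) * real n < real (Jmax P n \<theta>)"
proof (rule ccontr)
  assume "\<not> ?thesis"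
  then have b: "real (Jmax P n \<theta>) \<le> (1 - \<gamma>) * real n" by simp
  have bn: "Jmax P n \<theta> \<le> n" and mx: "P n \<bullet> e \<theta> \<le> P (Jmax P n \<theta>) \<bullet> e \<theta>" using Jmax_prop[of P n \<theta>] by auto
  define m where "m = n - Jmax P n \<theta>"
  have "real m = real n - real (Jmax P n \<theta>)" unfolding m_def using bn by simp
  then have "\<gamma> * real n \<le> real m" using b by (simp add: algebra_simps)
  moreover have "m \<le> n" unfolding m_def by simp
  moreover have "n - m = Jmax P n \<theta>" unfolding m_def using bn by simp
  ultimately have "(P n - P (Jmax P n \<theta>)) \<bullet> e \<theta> > 0" using pos by metis
  then show False using mx by (simp add: inner_diff_left)
qed

lemma walk0: "walk Z 0 \<omega> = 0" unfolding walk_def by simp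
lemma walk_res0: "i \<ge> 1 \<Longrightarrow> walk_res Z Z' i 0 \<omega> = 0" unfolding walk_res_def walk_def by simp




lemma (in prob_space) bad_sets:
  fixes W :: "'i \<Rightarrow> 'a \<Rightarrow> real"
  assumes indep: "indep_vars (\<lambda>_. borel) W J" and I: "\<forall>m\<le>n. I m \<subseteq> J \<and> finite (I m)"
  shows "{\<omega>\<in>space M. \<exists>m. \<gamma> * real n \<le> real m \<and> m \<le> n \<and> \<eta> * real m < \<bar>(\<Sum>i\<in>I m. W i \<omega>) - real m * c\<bar>} \<in> sets M"
proof -
  have eq: "{\<omega>\<in>space M. \<exists>m. \<gamma> * real n \<le> real m \<and> m \<le> n \<and> \<eta> * real m < \<bar>(\<Sum>i\<in>I m. W i \<omega>) - real m * c\<bar>}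
    = {\<omega>\<in>space M. \<exists>m\<in>{m. m \<le> n \<and> \<gamma> * real n \<le> real m}. \<eta> * real m < \<bar>(\<Sum>i\<in>I m. W i \<omega>) - real m * c\<bar>}"
    by auto
  show ?thesis unfolding eq
  proof (rule finite_ex_sets)
    fix m assume "m \<in> {m. m \<le> n \<and> \<gamma> * real n \<le> real m}"
    then have "I m \<subseteq> J" using I by auto
    from sum_meas_sub[OF indep this]
    show "{\<omega> \<in> space M. \<eta> * real m < \<bar>(\<Sum>i\<in>I m. W i \<omega>) - real m * c\<bar>} \<in> sets M" by measurable
  qed auto
qed

theorem lemma4p1:
  fixes M :: "'a measure" and Z Z' :: "nat \<Rightarrow> 'a \<Rightarrow> real \<times> real"
    and \<gamma> \<delta> :: real
  assumes "prob_space M"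
    and meas: "\<And>i. i \<ge> 1 \<Longrightarrow> Z i \<in> borel_measurable M"
    and meas': "\<And>i. i \<ge> 1 \<Longrightarrow> Z' i \<in> borel_measurable M"
    and indep: "prob_space.indep_vars M (\<lambda>_. borel)
                  (\<lambda>x. case x of Inl i \<Rightarrow> Z i | Inr i \<Rightarrow> Z' i)
                  (Inl ` {1..} \<union> Inr ` {1..})"
    and ident: "\<And>i. i \<ge> 1 \<Longrightarrow> distr M borel (Z i) = distr M borel (Z 1)"
    and ident': "\<And>i. i \<ge> 1 \<Longrightarrow> distr M borel (Z' i) = distr M borel (Z 1)"
    and \<gamma>: "0 < \<gamma>" "\<gamma> < 1/2"
    and \<delta>: "0 < \<delta>" "\<delta> < pi/2"
  shows "(\<forall>n i. i \<in> Iset n \<gamma> \<longrightarrow>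
            (AE \<omega> in M. \<forall>\<theta>\<in>{\<delta>..pi - \<delta>}.
               Delta Z Z' n i \<theta> \<omega> * indicator (Ev M Z Z' n i \<delta> \<gamma>) \<omega>
               = ((Z i \<omega> - Z' i \<omega>) \<bullet> e \<theta>) * indicator (Ev M Z Z' n i \<delta> \<gamma>) \<omega>))
       \<and> (\<forall>\<mu>::real. integrable M (Z 1) \<and> 0 < \<mu> \<and> prob_space.expectation M (Z 1) = \<mu> *\<^sub>R e (pi/2)
            \<longrightarrow> (\<lambda>n. MIN i\<in>{1..n}. measure M (Ev M Z Z' n i \<delta> \<gamma>)) \<longlonglongrightarrow> 1)"
proof (intro conjI allI impI)
  interpret prob_space M by fact
  show "AE \<omega> in M. \<forall>\<theta>\<in>{\<delta>..pi - \<delta>}.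
               Delta Z Z' n i \<theta> \<omega> * indicator (Ev M Z Z' n i \<delta> \<gamma>) \<omega>
               = ((Z i \<omega> - Z' i \<omega>) \<bullet> e \<theta>) * indicator (Ev M Z Z' n i \<delta> \<gamma>) \<omega>"
    if "i \<in> Iset n \<gamma>" for n i
    by (rule AE_I2) (rule part_i[OF that])
next
  fix \<mu> :: real
  assume H: "integrable M (Z 1) \<and> 0 < \<mu> \<and> prob_space.expectation M (Z 1) = \<mu> *\<^sub>R e (pi/2)"
  interpret prob_space M by fact
  have int: "integrable M (Z 1)" and \<mu>: "\<mu> > 0" and EZ: "expectation (Z 1) = \<mu> *\<^sub>R e (pi/2)"
    using H by auto
  have [measurable]: "Z 1 \<in> borel_measurable M" "Z (Suc 0) \<in> borel_measurable M" using meas by simp_all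
  have UUeq: "(\<lambda>x. case x of Inl i \<Rightarrow> Z i | Inr i \<Rightarrow> Z' i) = UU Z Z'"
    by (intro ext) (simp add: UU_def)
  have indU: "indep_vars (\<lambda>_. borel) (UU Z Z') JJ"
    using indep unfolding UUeq JJ_def .
  have distU: "distr M borel (UU Z Z' u) = distr M borel (Z 1)" if u: "u \<in> JJ" for u
  proof -
    from u obtain k where k: "k \<ge> 1" "u = Inl k \<or> u = Inr k" unfolding JJ_def by auto
    then show ?thesis
    proof (elim disjE)
      assume "u = Inl k" then show ?thesis using ident[OF k(1)] by (simp add: UU_def)
    next
      assume "u = Inr k" then show ?thesis using ident'[OF k(1)] by (simp add: UU_def)
    qed
  qed
  have measU: "UU Z Z' u \<in> borel_measurable M" if "u \<in> JJ" for u
    using indU that unfolding indep_vars_def by auto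
  have comp: "\<exists>g. g \<longlonglongrightarrow> 0 \<and> (\<forall>n Is. (\<forall>m\<le>n. Is m \<subseteq> JJ \<and> finite (Is m) \<and> card (Is m) = m) \<and>
            (\<forall>a c. a \<le> c \<longrightarrow> c \<le> n \<longrightarrow> Is a \<subseteq> Is c) \<longrightarrow>
         prob {\<omega>\<in>space M. \<exists>m. \<gamma> * real n \<le> real m \<and> m \<le> n \<and>
                 \<eta> * real m < \<bar>(\<Sum>u\<in>Is m. cf (UU Z Z' u \<omega>)) - real m * cf (expectation (Z 1))\<bar>} \<le> g n)"
    if c: "bounded_linear cf" and \<eta>: "\<eta> > 0" for cf :: "real \<times> real \<Rightarrow> real" and \<eta> :: real
  proof -
    have [measurable]: "cf \<in> borel_measurable borel"
      using c by (intro borel_measurable_continuous_onI linear_continuous_on)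
    have ind: "indep_vars (\<lambda>_. borel) (\<lambda>u \<omega>. cf (UU Z Z' u \<omega>)) JJ"
      using indU by (rule indep_vars_compose2) measurable
    have dist: "distr M borel (\<lambda>\<omega>. cf (UU Z Z' u \<omega>)) = distr M borel (\<lambda>\<omega>. cf (Z 1 \<omega>))" if "u \<in> JJ" for u
    proof -
      have [measurable]: "UU Z Z' u \<in> borel_measurable M" using measU[OF that] .
      have "distr M borel (\<lambda>\<omega>. cf (UU Z Z' u \<omega>)) = distr (distr M borel (UU Z Z' u)) borel cf"
        by (subst distr_distr) (auto simp: comp_def)
      also have "\<dots> = distr (distr M borel (Z 1)) borel cf" using distU[OF that] by simp
      also have "\<dots> = distr M borel (\<lambda>\<omega>. cf (Z 1 \<omega>))" by (subst distr_distr) (auto simp: comp_def)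
      finally show ?thesis .
    qed
    have intc: "integrable M (\<lambda>\<omega>. cf (Z 1 \<omega>))" by (rule integrable_bounded_linear[OF c int])
    have Ec: "expectation (\<lambda>\<omega>. cf (Z 1 \<omega>)) = cf (expectation (Z 1))"
      by (rule integral_bounded_linear[OF c int])
    show ?thesis using unif_lln_real[OF ind _ dist intc \<gamma>(1) \<eta>] unfolding Ec by simp
  qed
  define \<eta>1 where "\<eta>1 = \<mu> * sin \<delta> / 4"
  have sd: "sin \<delta> > 0" using \<delta> by (intro sin_gt_zero) auto
  have \<mu>2: "\<mu> / 2 > 0" using \<mu> by simp
  have \<eta>1: "\<eta>1 > 0" unfolding \<eta>1_def using \<mu> sd by simp
  have Efst: "fst (expectation (Z 1)) = 0" and Esnd: "snd (expectation (Z 1)) = \<mu>"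
    unfolding EZ e_def by simp_all
  obtain gx where gx: "gx \<longlonglongrightarrow> 0" "\<forall>n Is. (\<forall>m\<le>n. Is m \<subseteq> JJ \<and> finite (Is m) \<and> card (Is m) = m) \<and>
            (\<forall>a c. a \<le> c \<longrightarrow> c \<le> n \<longrightarrow> Is a \<subseteq> Is c) \<longrightarrow>
         prob {\<omega>\<in>space M. \<exists>m. \<gamma> * real n \<le> real m \<and> m \<le> n \<and>
                 \<eta>1 * real m < \<bar>(\<Sum>u\<in>Is m. fst (UU Z Z' u \<omega>)) - real m * 0\<bar>} \<le> gx n"
    using comp[OF bounded_linear_fst \<eta>1] unfolding Efst by (elim exE conjE) (rule that)
  obtain gy where gy: "gy \<longlonglongrightarrow> 0" "\<forall>n Is. (\<forall>m\<le>n. Is m \<subseteq> JJ \<and> finite (Is m) \<and> card (Is m) = m) \<and>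
            (\<forall>a c. a \<le> c \<longrightarrow> c \<le> n \<longrightarrow> Is a \<subseteq> Is c) \<longrightarrow>
         prob {\<omega>\<in>space M. \<exists>m. \<gamma> * real n \<le> real m \<and> m \<le> n \<and>
                 \<mu> / 2 * real m < \<bar>(\<Sum>u\<in>Is m. snd (UU Z Z' u \<omega>)) - real m * \<mu>\<bar>} \<le> gy n"
    using comp[OF bounded_linear_snd \<mu>2] unfolding Esnd by (elim exE conjE) (rule that)
  define BF where "BF n Is = {\<omega>\<in>space M. \<exists>m. \<gamma> * real n \<le> real m \<and> m \<le> n \<and>
                 \<eta>1 * real m < \<bar>(\<Sum>u\<in>Is m. fst (UU Z Z' u \<omega>)) - real m * 0\<bar>} \<union>
      {\<omega>\<in>space M. \<exists>m. \<gamma> * real n \<le> real m \<and> m \<le> n \<and>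
                 \<mu> / 2 * real m < \<bar>(\<Sum>u\<in>Is m. snd (UU Z Z' u \<omega>)) - real m * \<mu>\<bar>}" for n Is
  have BF: "BF n Is \<in> sets M \<and> prob (BF n Is) \<le> gx n + gy n"
    if fam: "(\<forall>m\<le>n. Is m \<subseteq> JJ \<and> finite (Is m) \<and> card (Is m) = m) \<and>
            (\<forall>a c. a \<le> c \<longrightarrow> c \<le> n \<longrightarrow> Is a \<subseteq> Is c)" for n Is
  proof -
    have I: "\<forall>m\<le>n. Is m \<subseteq> JJ \<and> finite (Is m)" using fam by auto
    have mfst: "(fst :: real \<times> real \<Rightarrow> real) \<in> borel_measurable borel"
      using bounded_linear_fst by (intro borel_measurable_continuous_onI linear_continuous_on)
    have msnd: "(snd :: real \<times> real \<Rightarrow> real) \<in> borel_measurable borel"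
      using bounded_linear_snd by (intro borel_measurable_continuous_onI linear_continuous_on)
    have indf: "indep_vars (\<lambda>_. borel) (\<lambda>u \<omega>. fst (UU Z Z' u \<omega>)) JJ"
      using indU by (rule indep_vars_compose2) (rule mfst)
    have inds: "indep_vars (\<lambda>_. borel) (\<lambda>u \<omega>. snd (UU Z Z' u \<omega>)) JJ"
      using indU by (rule indep_vars_compose2) (rule msnd)
    note s1 = bad_sets[OF indf I, of \<gamma> \<eta>1 0]
    note s2 = bad_sets[OF inds I, of \<gamma> "\<mu>/2" \<mu>]
    have "prob (BF n Is) \<le> gx n + gy n"
      unfolding BF_def
      by (rule order_trans[OF measure_Un_le[OF s1 s2] add_mono[OF gx(2)[rule_format, OF fam] gy(2)[rule_format, OF fam]]])
    moreover have "BF n Is \<in> sets M" unfolding BF_def using s1 s2 by (rule sets.Un)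
    ultimately show ?thesis by simp
  qed
  have good: "(\<Sum>u\<in>Is m. UU Z Z' u \<omega>) \<bullet> e \<theta> > 0"
    if w: "\<omega> \<in> space M" "\<omega> \<notin> BF n Is" and m: "\<gamma> * real n \<le> real m" "m \<le> n" and n: "n \<ge> 1"
      and th: "\<theta> \<in> {\<delta>..pi - \<delta>}" for \<omega> n Is m \<theta>
  proof -
    have x: "\<bar>(\<Sum>u\<in>Is m. fst (UU Z Z' u \<omega>))\<bar> \<le> \<eta>1 * real m"
      using w m unfolding BF_def by (auto simp: not_less)
    have y: "\<bar>(\<Sum>u\<in>Is m. snd (UU Z Z' u \<omega>)) - real m * \<mu>\<bar> \<le> \<mu> / 2 * real m"
      using w m unfolding BF_def by (auto simp: not_less)
    have mp: "real m > 0"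
    proof -
      have "\<gamma> * real n > 0" using \<gamma> n by simp
      then show ?thesis using m by linarith
    qed
    show ?thesis
    proof (rule dot_pos[OF \<delta> th \<mu> mp])
      show "\<bar>fst (\<Sum>u\<in>Is m. UU Z Z' u \<omega>)\<bar> \<le> \<mu> * sin \<delta> / 4 * real m"
        using x unfolding fst_sum \<eta>1_def .
      show "\<mu> / 2 * real m \<le> snd (\<Sum>u\<in>Is m. UU Z Z' u \<omega>)"
      proof -
        have y': "- ((\<Sum>u\<in>Is m. snd (UU Z Z' u \<omega>)) - real m * \<mu>) \<le> \<mu> / 2 * real m"
          using abs_le_D2[OF y] .
        have e1: "\<mu> / 2 * real m = (\<mu> * real m) / 2" and e2: "real m * \<mu> = \<mu> * real m" by simp_all
        show ?thesis unfolding snd_sum using y' unfolding e1 e2 by linarith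
      qed
    qed
  qed
  define G where "G n = 4 * (gx n + gy n)" for n
  have Gl: "G \<longlonglongrightarrow> 0" unfolding G_def using tendsto_mult[OF tendsto_const[of 4] tendsto_add[OF gx(1) gy(1)]] by simp
  have lower: "1 - G n \<le> prob (Ev M Z Z' n i \<delta> \<gamma>)" if n: "n \<ge> 1" and i: "i \<in> {1..n}" for n i
  proof -
    have i1: "i \<ge> 1" "i \<le> n" using i by auto
    define B where "B = BF n I1 \<union> BF n (I2 n) \<union> BF n (I3 i) \<union> BF n (I4 n i)"
    note b1 = BF[OF fam_I1[of n]] and b2 = BF[OF fam_I2[of n]] and b3 = BF[OF fam_I3[OF i1(1), of n]]
      and b4 = BF[OF fam_I4[OF i1]]
    have Bs: "B \<in> sets M" unfolding B_def using b1 b2 b3 b4 by auto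
    have pB: "prob B \<le> G n"
    proof -
      have a1: "prob B \<le> prob (BF n I1 \<union> BF n (I2 n) \<union> BF n (I3 i)) + prob (BF n (I4 n i))"
        unfolding B_def using b1 b2 b3 b4 by (intro measure_Un_le) auto
      have a2: "prob (BF n I1 \<union> BF n (I2 n) \<union> BF n (I3 i)) \<le> prob (BF n I1 \<union> BF n (I2 n)) + prob (BF n (I3 i))"
        using b1 b2 b3 by (intro measure_Un_le) auto
      have a3: "prob (BF n I1 \<union> BF n (I2 n)) \<le> prob (BF n I1) + prob (BF n (I2 n))"
        using b1 b2 by (intro measure_Un_le) auto
      show ?thesis unfolding G_def using a1 a2 a3 b1[THEN conjunct2] b2[THEN conjunct2] b3[THEN conjunct2] b4[THEN conjunct2] by argo
    qed
    have Evs: "Ev M Z Z' n i \<delta> \<gamma> \<in> sets M" by (rule Ev_sets[OF meas meas' i1(1) \<delta>])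
    have sub: "space M - Ev M Z Z' n i \<delta> \<gamma> \<subseteq> B"
    proof
      fix \<omega> assume "\<omega> \<in> space M - Ev M Z Z' n i \<delta> \<gamma>"
      then have w: "\<omega> \<in> space M" "\<omega> \<notin> Ev M Z Z' n i \<delta> \<gamma>" by auto
      show "\<omega> \<in> B"
      proof (rule ccontr)
        assume nB: "\<omega> \<notin> B"
        have "\<omega> \<in> Ev M Z Z' n i \<delta> \<gamma>"
          unfolding Ev_def
        proof (intro CollectI conjI ballI w(1))
          fix \<theta> assume th: "\<theta> \<in> {\<delta>..pi - \<delta>}"
          show "real (Jmin (\<lambda>j. walk Z j \<omega>) n \<theta>) < \<gamma> * real n"
          proof (rule Jmin_small)
            show "walk Z 0 \<omega> = 0" by (rule walk0)
            fix m assume "\<gamma> * real n \<le> real m" "m \<le> n"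
            from good[OF w(1) _ this n th, of I1] nB show "walk Z m \<omega> \<bullet> e \<theta> > 0"
              unfolding B_def sum_I1 by auto
          qed
          show "(1 - \<gamma>) * real n < real (Jmax (\<lambda>j. walk Z j \<omega>) n \<theta>)"
          proof (rule Jmax_big)
            fix m assume m: "\<gamma> * real n \<le> real m" "m \<le> n"
            from good[OF w(1) _ this n th, of "I2 n"] nB show "(walk Z n \<omega> - walk Z (n - m) \<omega>) \<bullet> e \<theta> > 0"
              unfolding B_def sum_I2[OF m(2)] by auto
          qed
          show "real (Jmin (\<lambda>j. walk_res Z Z' i j \<omega>) n \<theta>) < \<gamma> * real n"
          proof (rule Jmin_small)
            show "walk_res Z Z' i 0 \<omega> = 0" by (rule walk_res0[OF i1(1)])
            fix m assume "\<gamma> * real n \<le> real m" "m \<le> n"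
            from good[OF w(1) _ this n th, of "I3 i"] nB show "walk_res Z Z' i m \<omega> \<bullet> e \<theta> > 0"
              unfolding B_def sum_I3[OF i1(1)] by auto
          qed
          show "(1 - \<gamma>) * real n < real (Jmax (\<lambda>j. walk_res Z Z' i j \<omega>) n \<theta>)"
          proof (rule Jmax_big)
            fix m assume m: "\<gamma> * real n \<le> real m" "m \<le> n"
            from good[OF w(1) _ this n th, of "I4 n i"] nB
            show "(walk_res Z Z' i n \<omega> - walk_res Z Z' i (n - m) \<omega>) \<bullet> e \<theta> > 0"
              unfolding B_def sum_I4[OF i1 m(2)] by auto
          qed
        qed
        then show False using w(2) by simp
      qed
    qed
    have "prob (space M - Ev M Z Z' n i \<delta> \<gamma>) \<le> prob B"
      using sub Bs by (rule finite_measure_mono)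
    then show ?thesis using prob_compl[OF Evs] pB by linarith
  qed
  show "(\<lambda>n. MIN i\<in>{1..n}. measure M (Ev M Z Z' n i \<delta> \<gamma>)) \<longlonglongrightarrow> 1"
  proof (rule tendsto_sandwich[where f="\<lambda>n. 1 - G n" and h="\<lambda>_. 1"])
    show "\<forall>\<^sub>F n in sequentially. 1 - G n \<le> (MIN i\<in>{1..n}. measure M (Ev M Z Z' n i \<delta> \<gamma>))"
      unfolding eventually_sequentially
    proof (intro exI[of _ 1] allI impI)
      fix n :: nat assume n: "1 \<le> n"
      show "1 - G n \<le> (MIN i\<in>{1..n}. measure M (Ev M Z Z' n i \<delta> \<gamma>))"
        using n lower[OF n] by (subst Min_ge_iff) auto
    qed
    show "\<forall>\<^sub>F n in sequentially. (MIN i\<in>{1..n}. measure M (Ev M Z Z' n i \<delta> \<gamma>)) \<le> 1"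
      unfolding eventually_sequentially
    proof (intro exI[of _ 1] allI impI)
      fix n :: nat assume n: "1 \<le> n"
      have "(MIN i\<in>{1..n}. measure M (Ev M Z Z' n i \<delta> \<gamma>)) \<le> measure M (Ev M Z Z' n 1 \<delta> \<gamma>)"
        using n by (intro Min_le) auto
      also have "\<dots> \<le> 1" by simp
      finally show "(MIN i\<in>{1..n}. measure M (Ev M Z Z' n i \<delta> \<gamma>)) \<le> 1" .
    qed
    show "(\<lambda>n. 1 - G n) \<longlonglongrightarrow> 1" using tendsto_diff[OF tendsto_const[of 1] Gl] by simp
  qed (rule tendsto_const)
qed


end
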